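(* Lattices $U(2)+A_2+2D_4$, $U(2)+A_2+D_4+E_8$, $U(2)+A_2+E_8(2)$, and $U(2)+A_2+E_8$ are achiral.
   Context: $U$ hyperbolic plane, $A_n,D_n,E_n$ positive definite root lattices, $(2)$ multiplies the form by 2, $+$ orthogonal sum. For an even hyperbolic lattice $\mathbb L$ with $\operatorname{discr}_3\mathbb L=\mathbb Z/3$ and $\operatorname{discr}_2$ of period 2: $W$ is generated by reflections in 2-roots ($v^2=2$) and 6-roots ($v^2=6$, $v\cdot\mathbb L\subset3\mathbb Z$); cells $P$ are fundamental chambers of $W$ in the hyperbolic space, each lifting to $\pm P^\#$ in the double cover. An automorphism is $P$-direct if it preserves $P^\#$, $\mathbb Z/3$-reversing if it acts as $-\operatorname{id}$ on $\operatorname{discr}_3\mathbb L$. $\mathbb L$ is achiral if it admits an automorphism that is $\mathbb Z/3$-reversing and $P$-direct for some cell $P$. *)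

theory Defs
  imports "HOL-Analysis.Analysis"
begin

type_synonym gram = "int list list"

definition gentry :: "gram \<Rightarrow> nat \<Rightarrow> nat \<Rightarrow> int" where
  "gentry m i j = (if i < length m \<and> j < length (m ! i) then m ! i ! j else 0)"

definition rk :: "gram \<Rightarrow> nat" where
  "rk m = length m"

definition osum :: "gram \<Rightarrow> gram \<Rightarrow> gram" (infixr "\<oplus>\<^sub>L" 65) where
  "osum a b = map (\<lambda>r. r @ replicate (length b) 0) a @ map (\<lambda>r. replicate (length a) 0 @ r) b"

definition scale :: "int \<Rightarrow> gram \<Rightarrow> gram" where
  "scale k m = map (map (\<lambda>x. k * x)) m"

definition U_lat :: gram where "U_lat = [[0,1],[1,0]]"

definition A2_lat :: gram where "A2_lat = [[2,-1],[-1,2]]"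

definition D4_lat :: gram where
  "D4_lat = [[2,-1,0,0],[-1,2,-1,-1],[0,-1,2,0],[0,-1,0,2]]"

definition E8_lat :: gram where
  "E8_lat = [[ 2, 0,-1, 0, 0, 0, 0, 0],
             [ 0, 2, 0,-1, 0, 0, 0, 0],
             [-1, 0, 2,-1, 0, 0, 0, 0],
             [ 0,-1,-1, 2,-1, 0, 0, 0],
             [ 0, 0, 0,-1, 2,-1, 0, 0],
             [ 0, 0, 0, 0,-1, 2,-1, 0],
             [ 0, 0, 0, 0, 0,-1, 2,-1],
             [ 0, 0, 0, 0, 0, 0,-1, 2]]"

definition vspace :: "gram \<Rightarrow> (nat \<Rightarrow> real) set" where
  "vspace m = {x. \<forall>i\<ge>rk m. x i = 0}"

definition latt :: "gram \<Rightarrow> (nat \<Rightarrow> real) set" where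
  "latt m = {x \<in> vspace m. \<forall>i. x i \<in> \<int>}"

definition bil :: "gram \<Rightarrow> (nat \<Rightarrow> real) \<Rightarrow> (nat \<Rightarrow> real) \<Rightarrow> real" where
  "bil m x y = (\<Sum>i<rk m. \<Sum>j<rk m. of_int (gentry m i j) * x i * y j)"

definition dual_latt :: "gram \<Rightarrow> (nat \<Rightarrow> real) set" where
  "dual_latt m = {x \<in> vspace m. \<forall>v \<in> latt m. bil m x v \<in> \<int>}"

definition mapp :: "gram \<Rightarrow> (nat \<Rightarrow> nat \<Rightarrow> int) \<Rightarrow> (nat \<Rightarrow> real) \<Rightarrow> (nat \<Rightarrow> real)" where
  "mapp m M x = (\<lambda>i. if i < rk m then (\<Sum>j<rk m. of_int (M i j) * x j) else 0)"

definition is_aut :: "gram \<Rightarrow> (nat \<Rightarrow> nat \<Rightarrow> int) \<Rightarrow> bool" where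
  "is_aut m M \<longleftrightarrow>
     (\<forall>x\<in>vspace m. \<forall>y\<in>vspace m. bil m (mapp m M x) (mapp m M y) = bil m x y) \<and>
     (\<exists>N. \<forall>x\<in>vspace m. mapp m N (mapp m M x) = x \<and> mapp m M (mapp m N x) = x)"

text \<open>acts as -id on the 3-primary part of the discriminant group L^*/L\<close>
definition z3_reversing :: "gram \<Rightarrow> (nat \<Rightarrow> nat \<Rightarrow> int) \<Rightarrow> bool" where
  "z3_reversing m M \<longleftrightarrow>
     (\<forall>x\<in>dual_latt m. (\<exists>k::nat. (\<lambda>i. 3 ^ k * x i) \<in> latt m) \<longrightarrow> (\<lambda>i. mapp m M x i + x i) \<in> latt m)"

definition root2 :: "gram \<Rightarrow> (nat \<Rightarrow> real) \<Rightarrow> bool" where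
  "root2 m v \<longleftrightarrow> v \<in> latt m \<and> bil m v v = 2"

definition root6 :: "gram \<Rightarrow> (nat \<Rightarrow> real) \<Rightarrow> bool" where
  "root6 m v \<longleftrightarrow> v \<in> latt m \<and> bil m v v = 6 \<and> (\<forall>w\<in>latt m. bil m v w / 3 \<in> \<int>)"

definition mirrors :: "gram \<Rightarrow> (nat \<Rightarrow> real) set" where
  "mirrors m = (\<Union>r\<in>{r. root2 m r \<or> root6 m r}. {x \<in> vspace m. bil m x r = 0})"

text \<open>Cone over the hyperbolic space (the roots have positive square, so
  the hyperbolic space consists of the negative vectors); its two
  components give the double cover.\<close>
definition hcone :: "gram \<Rightarrow> (nat \<Rightarrow> real) set" where
  "hcone m = {x \<in> vspace m. bil m x x < 0}"

text \<open>A lifted cell P^# (as an open cone): a connected component of the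
  complement of the mirrors of W in the cone.\<close>
definition is_cell :: "gram \<Rightarrow> (nat \<Rightarrow> real) set \<Rightarrow> bool" where
  "is_cell m K \<longleftrightarrow>
     (\<exists>x \<in> hcone m - mirrors m. K = connected_component_set (hcone m - mirrors m) x)"

definition achiral :: "gram \<Rightarrow> bool" where
  "achiral m \<longleftrightarrow>
     (\<exists>M. is_aut m M \<and> z3_reversing m M \<and> (\<exists>K. is_cell m K \<and> mapp m M ` K = K))"

end

theory Submission
  imports Defs
begin

lemma sumL: "sum_list (map f [0..<n]) = (\<Sum>i<n. f i)"
  by (simp add: interv_sum_list_conv_sum_set_nat atLeast0LessThan)

lemma mapp_vspace: "mapp m M x \<in> vspace m"
  by (simp add: mapp_def vspace_def)

lemma latt_Ints: "x \<in> latt m \<Longrightarrow> x i \<in> \<int>"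
  by (simp add: latt_def)

lemma mapp_latt: "x \<in> latt m \<Longrightarrow> mapp m M x \<in> latt m"
proof -
  assume a: "x \<in> latt m"
  have "\<forall>i. mapp m M x i \<in> \<int>" using a by (auto simp: mapp_def latt_def intro!: Ints_sum Ints_mult)
  then show ?thesis using mapp_vspace[of m M x] by (simp add: latt_def)
qed

lemma latt_vspace: "x \<in> latt m \<Longrightarrow> x \<in> vspace m"
  by (simp add: latt_def)

lemma mapp_cont: "continuous_on UNIV (mapp m M)"
  unfolding mapp_def
proof (intro continuous_on_coordinatewise_then_product)
  fix i
  show "continuous_on UNIV (\<lambda>x. if i < rk m then \<Sum>j<rk m. real_of_int (M i j) * x j else 0)"
  proof (cases "i < rk m")
    case True
    then show ?thesis
      by (simp, intro continuous_on_sum continuous_on_mult_left continuous_on_product_coordinates)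
  next
    case False
    then show ?thesis by simp
  qed
qed

lemma achiral_from:
  assumes iso: "\<And>x y. bil m (mapp m M x) (mapp m M y) = bil m x y"
    and invo: "\<And>x. x \<in> vspace m \<Longrightarrow> mapp m M (mapp m M x) = x"
    and z3: "z3_reversing m M"
    and hv: "h \<in> vspace m" and hneg: "bil m h h < 0" and hnm: "h \<notin> mirrors m"
    and hfix: "mapp m M h = h"
  shows "achiral m"
proof -
  define f where "f = mapp m M"
  have aut: "is_aut m M"
    unfolding is_aut_def using iso invo mapp_vspace by blast
  have r2: "root2 m (f r)" if "root2 m r" for r
    using that iso mapp_latt unfolding root2_def f_def by auto
  have r6: "root6 m (f r)" if "root6 m r" for r
  proof -
    have rl: "r \<in> latt m" and rr: "bil m r r = 6" and rd: "\<forall>w\<in>latt m. bil m r w / 3 \<in> \<int>"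
      using that unfolding root6_def by auto
    have "bil m (f r) w / 3 \<in> \<int>" if "w \<in> latt m" for w
    proof -
      have "bil m (f r) w = bil m (f r) (f (f w))"
        using invo[of w] that latt_vspace unfolding f_def by auto
      also have "\<dots> = bil m r (f w)" using iso unfolding f_def by simp
      finally show ?thesis using rd mapp_latt[OF that] unfolding f_def by simp
    qed
    then show ?thesis using rl rr iso mapp_latt unfolding root6_def f_def by auto
  qed
  define S where "S = hcone m - mirrors m"
  have Smap: "f x \<in> S" if "x \<in> S" for x
  proof -
    have xv: "x \<in> vspace m" and xx: "bil m x x < 0" and xm: "x \<notin> mirrors m"
      using that unfolding S_def hcone_def by auto
    have "f x \<in> hcone m" using xx iso mapp_vspace unfolding hcone_def f_def by auto
    moreover have "f x \<notin> mirrors m"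
    proof
      assume "f x \<in> mirrors m"
      then obtain r where rt: "root2 m r \<or> root6 m r" and z: "bil m (f x) r = 0"
        unfolding mirrors_def by auto
      have rv: "r \<in> vspace m" using rt unfolding root2_def root6_def by (auto simp: latt_def)
      have "bil m x (f r) = bil m (f x) (f (f r))" using iso unfolding f_def by simp
      also have "\<dots> = 0" using invo[OF rv] z unfolding f_def by simp
      finally have "bil m x (f r) = 0" .
      moreover have "root2 m (f r) \<or> root6 m (f r)" using rt r2 r6 by blast
      ultimately have "x \<in> mirrors m" using xv unfolding mirrors_def by auto
      then show False using xm by simp
    qed
    ultimately show ?thesis unfolding S_def by simp
  qed
  have hS: "h \<in> S" using hv hneg hnm unfolding S_def hcone_def by simp
  define K where "K = connected_component_set S h"
  have hK: "h \<in> K" using hS unfolding K_def by (simp add: connected_component_refl)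
  have KS: "K \<subseteq> S" unfolding K_def by (rule connected_component_subset)
  have cK: "connected K" unfolding K_def by (rule connected_connected_component)
  have fcont: "continuous_on K f" unfolding f_def using mapp_cont continuous_on_subset by blast
  have fK: "f ` K \<subseteq> K"
  proof -
    have "h \<in> f ` K" using hK hfix unfolding f_def by force
    moreover have "connected (f ` K)" using connected_continuous_image[OF fcont cK] .
    moreover have "f ` K \<subseteq> S" using KS Smap by blast
    ultimately show ?thesis unfolding K_def by (rule connected_component_maximal)
  qed
  have Kf: "K \<subseteq> f ` K"
  proof
    fix y assume "y \<in> K"
    then have "y \<in> vspace m" using KS unfolding S_def hcone_def by auto
    then have "y = f (f y)" using invo unfolding f_def by simp
    moreover have "f y \<in> K" using fK \<open>y \<in> K\<close> by blast
    ultimately show "y \<in> f ` K" by blast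
  qed
  have cell: "is_cell m K" unfolding is_cell_def K_def using hS unfolding S_def by blast
  show ?thesis unfolding achiral_def
    using aut z3 cell fK Kf unfolding f_def by blast
qed

definition ventry :: "int list \<Rightarrow> nat \<Rightarrow> int" where
  "ventry v j = (if j < length v then v ! j else 0)"

definition ivec :: "int list \<Rightarrow> nat \<Rightarrow> real" where
  "ivec v = (\<lambda>j. real_of_int (ventry v j))"

definition symG :: "gram \<Rightarrow> bool" where
  "symG m \<longleftrightarrow> list_all (\<lambda>i. list_all (\<lambda>j. gentry m i j = gentry m j i) [0..<rk m]) [0..<rk m]"

lemma symG_D: "symG m \<Longrightarrow> i < rk m \<Longrightarrow> j < rk m \<Longrightarrow> gentry m i j = gentry m j i"
  unfolding symG_def list_all_iff by auto

definition Gv :: "gram \<Rightarrow> int list \<Rightarrow> int list" where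
  "Gv m v = map (\<lambda>i. sum_list (map (\<lambda>j. gentry m i j * ventry v j) [0..<rk m])) [0..<rk m]"

definition bilI :: "gram \<Rightarrow> int list \<Rightarrow> int list \<Rightarrow> int" where
  "bilI m u v = sum_list (map (\<lambda>i. ventry u i * ventry (Gv m v) i) [0..<rk m])"

lemma ventry_Gv: "i < rk m \<Longrightarrow> ventry (Gv m v) i = (\<Sum>j<rk m. gentry m i j * ventry v j)"
  by (simp add: ventry_def Gv_def sumL)

lemma bil_addL: "bil m (\<lambda>i. x i + y i) z = bil m x z + bil m y z"
  unfolding bil_def by (simp add: algebra_simps sum.distrib)
lemma bil_addR: "bil m z (\<lambda>i. x i + y i) = bil m z x + bil m z y"
  unfolding bil_def by (simp add: algebra_simps sum.distrib)
lemma bil_smulL: "bil m (\<lambda>i. c * x i) z = c * bil m x z"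
  unfolding bil_def by (simp add: sum_distrib_left algebra_simps)
lemma bil_smulR: "bil m z (\<lambda>i. c * x i) = c * bil m z x"
  unfolding bil_def by (simp add: sum_distrib_left algebra_simps)
lemma bil_diffL: "bil m (\<lambda>i. x i - y i) z = bil m x z - bil m y z"
  unfolding bil_def by (simp add: algebra_simps sum_subtractf)
lemma bil_diffR: "bil m z (\<lambda>i. x i - y i) = bil m z x - bil m z y"
  unfolding bil_def by (simp add: algebra_simps sum_subtractf)

lemma bil_sumL: "bil m (\<lambda>i. \<Sum>a\<in>A. f a * x a i) z = (\<Sum>a\<in>A. f a * bil m (x a) z)"
  unfolding bil_def
  by (simp add: sum_distrib_left sum_distrib_right algebra_simps sum.swap[of _ A])

lemma bil_sumR: "bil m z (\<lambda>i. \<Sum>a\<in>A. f a * x a i) = (\<Sum>a\<in>A. f a * bil m z (x a))"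
  unfolding bil_def
  by (simp add: sum_distrib_left sum_distrib_right algebra_simps sum.swap[of _ A])

lemma bil_sym: "symG m \<Longrightarrow> bil m x y = bil m y x"
  unfolding bil_def
  by (subst sum.swap) (auto intro!: sum.cong simp: algebra_simps dest: symG_D)

lemma bil_lin: "bil m x y = (\<Sum>i<rk m. x i * (\<Sum>j<rk m. real_of_int (gentry m i j) * y j))"
  unfolding bil_def by (simp add: sum_distrib_left algebra_simps)

lemma bil_vecR: "bil m x (ivec v) = (\<Sum>i<rk m. x i * real_of_int (ventry (Gv m v) i))"
  unfolding bil_lin by (intro sum.cong refl) (simp add: ventry_Gv ivec_def)

lemma bil_vec_vec: "bil m (ivec u) (ivec v) = real_of_int (bilI m u v)"
  unfolding bil_vecR bilI_def by (simp add: sumL ivec_def)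

lemma bil_int_vec: "bil m (\<lambda>i. real_of_int (z i)) (ivec v) = real_of_int (\<Sum>i<rk m. z i * ventry (Gv m v) i)"
  unfolding bil_vecR by simp

lemma bil_int_int: "bil m (\<lambda>i. real_of_int (z i)) (\<lambda>i. real_of_int (w i)) = real_of_int (\<Sum>i<rk m. \<Sum>j<rk m. gentry m i j * z i * w j)"
  unfolding bil_def by simp

definition mprod :: "nat \<Rightarrow> int list list \<Rightarrow> int list list \<Rightarrow> int list list" where
  "mprod n A B = map (\<lambda>i. map (\<lambda>l. sum_list (map (\<lambda>j. gentry A i j * gentry B j l) [0..<n])) [0..<n]) [0..<n]"

lemma gentry_mprod: "i < n \<Longrightarrow> l < n \<Longrightarrow> gentry (mprod n A B) i l = (\<Sum>j<n. gentry A i j * gentry B j l)"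
proof -
  assume a: "i < n" "l < n"
  have "mprod n A B ! i ! l = sum_list (map (\<lambda>j. gentry A i j * gentry B j l) [0..<n])"
    using a unfolding mprod_def by (simp del: upt_Suc)
  then show ?thesis using a unfolding gentry_def[of "mprod n A B"] by (simp add: mprod_def sumL del: upt_Suc)
qed

definition isoChkA :: "gram \<Rightarrow> int list list \<Rightarrow> int list list \<Rightarrow> bool" where
  "isoChkA m A GA =
     list_all (\<lambda>k. list_all (\<lambda>l. sum_list (map (\<lambda>i. gentry A i k * gentry GA i l) [0..<rk m]) = gentry m k l) [0..<rk m]) [0..<rk m]"

definition isoChk :: "gram \<Rightarrow> int list list \<Rightarrow> bool" where
  "isoChk m A = isoChkA m A (mprod (rk m) m A)"

definition invChk :: "nat \<Rightarrow> int list list \<Rightarrow> bool" where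
  "invChk n A = list_all (\<lambda>i. list_all (\<lambda>k. sum_list (map (\<lambda>j. gentry A i j * gentry A j k) [0..<n]) = (if i = k then 1 else 0)) [0..<n]) [0..<n]"

definition fixChk :: "gram \<Rightarrow> int list list \<Rightarrow> int list \<Rightarrow> bool" where
  "fixChk m A h = (length h = rk m \<and> list_all (\<lambda>i. sum_list (map (\<lambda>j. gentry A i j * ventry h j) [0..<rk m]) = ventry h i) [0..<rk m])"

definition a6Chk :: "gram \<Rightarrow> int list list \<Rightarrow> bool" where
  "a6Chk m A6 = list_all (\<lambda>i. list_all (\<lambda>l. sum_list (map (\<lambda>j. gentry A6 i j * gentry m j l) [0..<rk m]) = (if i = l then 6 else 0)) [0..<rk m]) [0..<rk m]"

definition pqChkA :: "gram \<Rightarrow> int list list \<Rightarrow> int list list \<Rightarrow> int list list \<Rightarrow> bool" where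
  "pqChkA m A GP Q = list_all (\<lambda>i. list_all (\<lambda>j. gentry A i j + (if i = j then 1 else 0) = gentry GP i j + 3 * gentry Q i j) [0..<rk m]) [0..<rk m]"

definition pqChk :: "gram \<Rightarrow> int list list \<Rightarrow> int list list \<Rightarrow> int list list \<Rightarrow> bool" where
  "pqChk m A P Q = pqChkA m A (mprod (rk m) P m) Q"

lemma mapp_as_sum: "mapp m A x = (\<lambda>i. \<Sum>k<rk m. x k * (if i < rk m then real_of_int (A i k) else 0))"
  unfolding mapp_def by (auto simp: fun_eq_iff mult.commute)

lemma bil_mapp_iso:
  assumes "isoChk m A"
  shows "bil m (mapp m (gentry A) x) (mapp m (gentry A) y) = bil m x y"
proof -
  let ?n = "rk m"
  let ?c = "\<lambda>k i. if i < rk m then real_of_int (gentry A i k) else 0"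
  have chk: "\<And>k l. k < ?n \<Longrightarrow> l < ?n \<Longrightarrow> (\<Sum>i<?n. gentry A i k * (\<Sum>j<?n. gentry m i j * gentry A j l)) = gentry m k l"
    using assms unfolding isoChk_def isoChkA_def list_all_iff by (auto simp: gentry_mprod sumL)
  have cc: "bil m (?c k) (?c l) = real_of_int (gentry m k l)" if "k < ?n" "l < ?n" for k l
  proof -
    have "bil m (?c k) (?c l) = (\<Sum>i<?n. real_of_int (gentry A i k) * (\<Sum>j<?n. real_of_int (gentry m i j) * real_of_int (gentry A j l)))"
      unfolding bil_lin by simp
    also have "\<dots> = real_of_int (\<Sum>i<?n. gentry A i k * (\<Sum>j<?n. gentry m i j * gentry A j l))" by simp
    also have "\<dots> = real_of_int (gentry m k l)" using chk that by simp
    finally show ?thesis .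
  qed
  have "bil m (mapp m (gentry A) x) (mapp m (gentry A) y) = (\<Sum>k<?n. x k * (\<Sum>l<?n. y l * bil m (?c k) (?c l)))"
    unfolding mapp_as_sum bil_sumL bil_sumR by simp
  also have "\<dots> = (\<Sum>k<?n. x k * (\<Sum>l<?n. y l * real_of_int (gentry m k l)))"
    using cc by simp
  also have "\<dots> = bil m x y" unfolding bil_lin by (simp add: mult.commute)
  finally show ?thesis .
qed

lemma mapp_invol:
  assumes "invChk (rk m) A" "x \<in> vspace m"
  shows "mapp m (gentry A) (mapp m (gentry A) x) = x"
proof
  fix i
  let ?n = "rk m"
  show "mapp m (gentry A) (mapp m (gentry A) x) i = x i"
  proof (cases "i < ?n")
    case True
    have chk: "\<And>k. k < ?n \<Longrightarrow> (\<Sum>j<?n. gentry A i j * gentry A j k) = (if i = k then 1 else 0)"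
      using assms(1) True unfolding invChk_def list_all_iff by (auto simp: sumL)
    have "mapp m (gentry A) (mapp m (gentry A) x) i = (\<Sum>j<?n. real_of_int (gentry A i j) * (\<Sum>k<?n. real_of_int (gentry A j k) * x k))"
      using True by (simp add: mapp_def)
    also have "\<dots> = (\<Sum>j<?n. \<Sum>k<?n. real_of_int (gentry A i j) * real_of_int (gentry A j k) * x k)"
      by (simp add: sum_distrib_left mult.assoc)
    also have "\<dots> = (\<Sum>k<?n. \<Sum>j<?n. real_of_int (gentry A i j) * real_of_int (gentry A j k) * x k)"
      by (rule sum.swap)
    also have "\<dots> = (\<Sum>k<?n. real_of_int (\<Sum>j<?n. gentry A i j * gentry A j k) * x k)"
      by (simp add: sum_distrib_right)
    also have "\<dots> = (\<Sum>k<?n. (if i = k then x k else 0))"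
      by (intro sum.cong refl) (simp add: chk)
    also have "\<dots> = x i" using True by simp
    finally show ?thesis .
  next
    case False
    then show ?thesis using assms(2) by (simp add: mapp_def vspace_def)
  qed
qed

lemma mapp_fix:
  assumes "fixChk m A h"
  shows "mapp m (gentry A) (ivec h) = ivec h"
proof
  fix i
  show "mapp m (gentry A) (ivec h) i = ivec h i"
  proof (cases "i < rk m")
    case True
    then have "(\<Sum>j<rk m. gentry A i j * ventry h j) = ventry h i"
      using assms unfolding fixChk_def list_all_iff by (auto simp: sumL)
    then have "(\<Sum>j<rk m. real_of_int (gentry A i j) * real_of_int (ventry h j)) = real_of_int (ventry h i)"
      by (metis (mono_tags, lifting) of_int_mult of_int_sum sum.cong)
    then show ?thesis using True by (simp add: mapp_def ivec_def)
  next
    case False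
    then show ?thesis using assms by (simp add: mapp_def ivec_def ventry_def fixChk_def)
  qed
qed

lemma three_int:
  fixes y :: real
  assumes "6 * y \<in> \<int>" "3 ^ k * y \<in> \<int>"
  shows "3 * y \<in> \<int>"
proof (cases k)
  case 0
  then have "y \<in> \<int>" using assms by simp
  then show ?thesis by (simp add: Ints_mult)
next
  case (Suc j)
  have "odd ((3::nat) ^ j)" by simp
  then obtain c :: nat where c: "(3::nat) ^ j = 2 * c + 1" by (metis oddE)
  have r: "(3::real) ^ j = 2 * real c + 1" using c by (metis of_nat_numeral of_nat_power of_nat_Suc of_nat_mult of_nat_add of_nat_1)
  have "3 * y = 3 ^ Suc j * y - real c * (6 * y)"
    using r by (simp add: algebra_simps)
  then show ?thesis using assms Suc by (simp add: Ints_diff Ints_mult)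
qed

lemma unit_latt: "j < rk m \<Longrightarrow> (\<lambda>i. if i = j then 1 else 0) \<in> latt m"
  by (auto simp: latt_def vspace_def)

lemma bil_unit: "j < rk m \<Longrightarrow> bil m x (\<lambda>i. if i = j then 1 else 0) = (\<Sum>i<rk m. x i * real_of_int (gentry m i j))"
  unfolding bil_lin by (simp add: if_distrib cong: if_cong)

lemma z3_from:
  assumes sym: "symG m" and a6: "a6Chk m A6" and pq: "pqChk m A P Q"
  shows "z3_reversing m (gentry A)"
  unfolding z3_reversing_def
proof (intro ballI impI)
  let ?n = "rk m"
  fix x assume xd: "x \<in> dual_latt m" and "\<exists>k. (\<lambda>i. 3 ^ k * x i) \<in> latt m"
  then obtain k where k: "(\<lambda>i. 3 ^ k * x i) \<in> latt m" by blast
  have xv: "x \<in> vspace m" using xd by (simp add: dual_latt_def)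
  define g where "g j = bil m x (\<lambda>i. if i = j then 1 else 0)" for j
  have gI: "g j \<in> \<int>" if "j < ?n" for j
    using xd unit_latt[OF that] unfolding dual_latt_def g_def by auto
  have gs: "g j = (\<Sum>l<?n. real_of_int (gentry m j l) * x l)" if "j < ?n" for j
  proof -
    have "g j = (\<Sum>l<?n. x l * real_of_int (gentry m l j))" unfolding g_def using bil_unit[OF that] by simp
    also have "\<dots> = (\<Sum>l<?n. real_of_int (gentry m j l) * x l)"
      using sym that by (intro sum.cong refl) (auto simp: mult.commute dest: symG_D)
    finally show ?thesis .
  qed
  have six: "6 * x i \<in> \<int>" for i
  proof (cases "i < ?n")
    case True
    have chk: "\<And>l. l < ?n \<Longrightarrow> (\<Sum>j<?n. gentry A6 i j * gentry m j l) = (if i = l then 6 else 0)"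
      using a6 True unfolding a6Chk_def list_all_iff by (auto simp: sumL)
    have "(\<Sum>j<?n. real_of_int (gentry A6 i j) * g j) = (\<Sum>j<?n. \<Sum>l<?n. real_of_int (gentry A6 i j) * real_of_int (gentry m j l) * x l)"
      by (simp add: gs sum_distrib_left mult.assoc)
    also have "\<dots> = (\<Sum>l<?n. \<Sum>j<?n. real_of_int (gentry A6 i j) * real_of_int (gentry m j l) * x l)"
      by (rule sum.swap)
    also have "\<dots> = (\<Sum>l<?n. real_of_int (\<Sum>j<?n. gentry A6 i j * gentry m j l) * x l)"
      by (simp add: sum_distrib_right)
    also have "\<dots> = (\<Sum>l<?n. if i = l then 6 * x l else 0)"
      by (intro sum.cong refl) (simp add: chk)
    also have "\<dots> = 6 * x i" using True by simp
    finally have "6 * x i = (\<Sum>j<?n. real_of_int (gentry A6 i j) * g j)" by simp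
    then show ?thesis using gI by (auto intro!: Ints_sum Ints_mult)
  next
    case False
    then show ?thesis using xv by (simp add: vspace_def)
  qed
  have three: "3 * x i \<in> \<int>" for i
    using three_int[OF six] k unfolding latt_def by auto
  have "(\<lambda>i. mapp m (gentry A) x i + x i) \<in> vspace m"
    using xv by (simp add: vspace_def mapp_def)
  moreover have "mapp m (gentry A) x i + x i \<in> \<int>" for i
  proof (cases "i < ?n")
    case True
    have chk: "\<And>j. j < ?n \<Longrightarrow> gentry A i j + (if i = j then 1 else 0) = (\<Sum>k<?n. gentry P i k * gentry m k j) + 3 * gentry Q i j"
      using pq True unfolding pqChk_def pqChkA_def list_all_iff by (auto simp: sumL gentry_mprod)
    have s1: "(\<Sum>j<?n. real_of_int (gentry A i j + (if i = j then 1 else 0)) * x j) = (\<Sum>j<?n. real_of_int (gentry A i j) * x j) + (\<Sum>j<?n. (if i = j then x j else 0))"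
      by (subst sum.distrib[symmetric]) (intro sum.cong refl, auto simp: algebra_simps)
    have "mapp m (gentry A) x i + x i = (\<Sum>j<?n. real_of_int (gentry A i j + (if i = j then 1 else 0)) * x j)"
      using True unfolding s1 by (simp add: mapp_def)
    also have "\<dots> = (\<Sum>j<?n. real_of_int (\<Sum>k<?n. gentry P i k * gentry m k j) * x j + real_of_int (gentry Q i j) * (3 * x j))"
      by (intro sum.cong refl) (simp add: chk algebra_simps)
    also have "\<dots> = (\<Sum>j<?n. \<Sum>k<?n. real_of_int (gentry P i k) * real_of_int (gentry m k j) * x j) + (\<Sum>j<?n. real_of_int (gentry Q i j) * (3 * x j))"
      by (simp add: sum.distrib sum_distrib_right)
    also have "\<dots> = (\<Sum>k<?n. \<Sum>j<?n. real_of_int (gentry P i k) * real_of_int (gentry m k j) * x j) + (\<Sum>j<?n. real_of_int (gentry Q i j) * (3 * x j))"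
      by (subst sum.swap) (rule refl)
    also have "\<dots> = (\<Sum>k<?n. real_of_int (gentry P i k) * g k) + (\<Sum>j<?n. real_of_int (gentry Q i j) * (3 * x j))"
      by (simp add: gs sum_distrib_left mult.assoc)
    finally have eq: "mapp m (gentry A) x i + x i = \<dots>" .
    have t2: "(\<Sum>j<?n. real_of_int (gentry Q i j) * (3 * x j)) \<in> \<int>"
      by (rule Ints_sum) (rule Ints_mult[OF Ints_of_int three])
    have t1: "(\<Sum>k<?n. real_of_int (gentry P i k) * g k) \<in> \<int>"
      by (rule Ints_sum) (rule Ints_mult[OF Ints_of_int gI], simp)
    show ?thesis unfolding eq by (rule Ints_add[OF t1 t2])
  next
    case False
    then show ?thesis using xv by (simp add: vspace_def mapp_def)
  qed
  ultimately show "(\<lambda>i. mapp m (gentry A) x i + x i) \<in> latt m" by (simp add: latt_def)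
qed

definition lf :: "nat \<Rightarrow> int list \<Rightarrow> (nat \<Rightarrow> real) \<Rightarrow> real" where
  "lf n a x = (\<Sum>i<n. real_of_int (ventry a i) * x i)"

definition psdChkA :: "gram \<Rightarrow> int list \<Rightarrow> int list \<Rightarrow> int \<Rightarrow> int \<Rightarrow> (int \<times> int list) list \<Rightarrow> bool" where
  "psdChkA m Ge ell d2 den wcs = (0 < d2 \<and> 0 < den \<and> list_all (\<lambda>(w,c). 0 \<le> w) wcs \<and>
     list_all (\<lambda>i. list_all (\<lambda>j. d2 * (2 * den * gentry m i j + ventry Ge i * ventry ell j + ventry ell i * ventry Ge j)
        = sum_list (map (\<lambda>(w,c). w * ventry c i * ventry c j) wcs)) [0..<rk m]) [0..<rk m])"

definition psdChk :: "gram \<Rightarrow> int list \<Rightarrow> int list \<Rightarrow> int \<Rightarrow> int \<Rightarrow> (int \<times> int list) list \<Rightarrow> bool" where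
  "psdChk m e ell d2 den wcs = psdChkA m (Gv m e) ell d2 den wcs"

lemma lf_prod: "lf n a x * lf n b x = (\<Sum>i<n. \<Sum>j<n. real_of_int (ventry a i * ventry b j) * x i * x j)"
  unfolding lf_def sum_product by (intro sum.cong refl) (simp add: algebra_simps)

lemma wcs_sum: "sum_list (map (\<lambda>(w,c). real_of_int w * (lf n c x)^2) wcs)
   = (\<Sum>i<n. \<Sum>j<n. real_of_int (sum_list (map (\<lambda>(w,c). w * ventry c i * ventry c j) wcs)) * x i * x j)"
proof (induction wcs)
  case Nil
  then show ?case by simp
next
  case (Cons wc wcs)
  obtain w c where wc: "wc = (w, c)" by (cases wc)
  have "real_of_int w * (lf n c x)^2 = (\<Sum>i<n. \<Sum>j<n. real_of_int (w * ventry c i * ventry c j) * x i * x j)"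
    unfolding power2_eq_square lf_prod by (simp add: sum_distrib_left algebra_simps)
  then show ?case using Cons by (simp add: wc sum.distrib[symmetric] algebra_simps)
qed

lemma bil_as_lf: "bil m x (ivec v) = lf (rk m) (Gv m v) x"
  unfolding bil_vecR lf_def by (simp add: mult.commute)

lemma psd_perp:
  assumes chk: "psdChk m e ell d2 den wcs" and perp: "bil m x (ivec e) = 0"
  shows "0 \<le> bil m x x"
proof -
  let ?n = "rk m"
  let ?Ge = "Gv m e"
  have pos: "0 < d2" "0 < den" and wpos: "list_all (\<lambda>(w,c). 0 \<le> w) wcs"
    using chk unfolding psdChk_def psdChkA_def by auto
  have coef: "\<And>i j. i < ?n \<Longrightarrow> j < ?n \<Longrightarrow> d2 * (2 * den * gentry m i j + ventry ?Ge i * ventry ell j + ventry ell i * ventry ?Ge j)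
        = sum_list (map (\<lambda>(w,c). w * ventry c i * ventry c j) wcs)"
    using chk unfolding psdChk_def psdChkA_def list_all_iff by auto
  have L: "real_of_int d2 * (2 * real_of_int den * bil m x x + lf ?n ?Ge x * lf ?n ell x + lf ?n ell x * lf ?n ?Ge x)
     = (\<Sum>i<?n. \<Sum>j<?n. real_of_int (d2 * (2 * den * gentry m i j + ventry ?Ge i * ventry ell j + ventry ell i * ventry ?Ge j)) * x i * x j)"
    unfolding lf_prod bil_def
    by (simp add: sum_distrib_left sum.distrib[symmetric] algebra_simps)
  also have "\<dots> = (\<Sum>i<?n. \<Sum>j<?n. real_of_int (sum_list (map (\<lambda>(w,c). w * ventry c i * ventry c j) wcs)) * x i * x j)"
    using coef by (intro sum.cong refl) simp
  also have "\<dots> = sum_list (map (\<lambda>(w,c). real_of_int w * (lf ?n c x)^2) wcs)"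
    by (rule wcs_sum[symmetric])
  finally have eq: "real_of_int d2 * (2 * real_of_int den * bil m x x + lf ?n ?Ge x * lf ?n ell x + lf ?n ell x * lf ?n ?Ge x)
     = sum_list (map (\<lambda>(w,c). real_of_int w * (lf ?n c x)^2) wcs)" .
  have "0 \<le> sum_list (map (\<lambda>(w,c). real_of_int w * (lf ?n c x)^2) wcs)"
    using wpos by (induction wcs) auto
  moreover have "lf ?n ?Ge x = 0" using perp bil_as_lf by simp
  ultimately have "0 \<le> real_of_int d2 * (2 * real_of_int den * bil m x x)" using eq by simp
  then show ?thesis using pos by (simp add: zero_le_mult_iff)
qed

lemma quad_disc:
  fixes A Bq C :: real
  assumes "\<And>t. 0 \<le> A - 2 * t * Bq + t^2 * C" and C0: "0 \<le> C"
  shows "Bq^2 \<le> A * C"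
proof (cases "C = 0")
  case True
  have "Bq = 0"
  proof (rule ccontr)
    assume nz: "Bq \<noteq> 0"
    have "0 \<le> A - 2 * ((A + 1) / (2 * Bq)) * Bq" using assms(1)[of "(A + 1) / (2 * Bq)"] True by simp
    also have "\<dots> = -1" using nz by (simp add: field_simps)
    finally show False by simp
  qed
  then show ?thesis using True by simp
next
  case False
  then have Cp: "0 < C" using C0 by simp
  have "0 \<le> A - 2 * (Bq / C) * Bq + (Bq / C)^2 * C" using assms(1)[of "Bq / C"] by simp
  also have "\<dots> = A - Bq^2 / C" using Cp by (simp add: field_simps power2_eq_square)
  finally have "Bq^2 / C \<le> A" by simp
  then show ?thesis using Cp by (simp add: field_simps)
qed

lemma cs_perp:
  assumes sym: "symG m" and chk: "psdChk m e ell d2 den wcs"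
    and px: "bil m x (ivec e) = 0" and py: "bil m y (ivec e) = 0"
  shows "(bil m x y)^2 \<le> bil m x x * bil m y y"
proof (rule quad_disc)
  show "0 \<le> bil m y y" using psd_perp[OF chk py] .
next
  fix t
  let ?z = "\<lambda>i. x i - t * y i"
  have "bil m ?z (ivec e) = 0" using px py by (simp add: bil_diffL bil_smulL)
  then have "0 \<le> bil m ?z ?z" by (rule psd_perp[OF chk])
  also have "bil m ?z ?z = bil m x x - 2 * t * bil m x y + t^2 * bil m y y"
    using bil_sym[OF sym, of y x]
    by (simp add: bil_diffL bil_diffR bil_smulL bil_smulR power2_eq_square algebra_simps)
  finally show "0 \<le> bil m x x - 2 * t * bil m x y + t^2 * bil m y y" .
qed

lemma superinc:
  fixes c :: "nat \<Rightarrow> int" and T B P :: int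
  assumes "\<And>i. i < k \<Longrightarrow> \<bar>c i\<bar> \<le> B" "2 * B < T" "0 \<le> B"
    and "T ^ k * P + (\<Sum>i<k. T ^ i * c i) = 0"
  shows "P = 0 \<and> (\<forall>i<k. c i = 0)"
  using assms
proof (induction k arbitrary: c)
  case 0
  then show ?case by simp
next
  case (Suc k)
  have T0: "0 < T" using Suc.prems by simp
  have split: "(\<Sum>i<Suc k. T ^ i * c i) = c 0 + T * (\<Sum>i<k. T ^ i * c (Suc i))"
    unfolding sum.lessThan_Suc_shift by (simp add: sum_distrib_left mult.assoc)
  define R where "R = T ^ k * P + (\<Sum>i<k. T ^ i * c (Suc i))"
  have "T ^ Suc k * P = T * (T ^ k * P)" by simp
  then have eq: "c 0 + T * R = 0"
    using Suc.prems(4) split unfolding R_def by (simp add: distrib_left)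
  then have cq: "c 0 = T * (- R)" by simp
  have c0: "c 0 = 0"
  proof (rule ccontr)
    assume "c 0 \<noteq> 0"
    then have "R \<noteq> 0" using cq by auto
    then have "1 \<le> \<bar>R\<bar>" by simp
    then have "T * 1 \<le> T * \<bar>R\<bar>" using T0 by (intro mult_left_mono) auto
    also have "\<dots> = \<bar>c 0\<bar>" using cq T0 by (simp add: abs_mult)
    finally have "T \<le> \<bar>c 0\<bar>" by simp
    moreover have "\<bar>c 0\<bar> \<le> B" using Suc.prems(1)[of 0] by simp
    ultimately show False using Suc.prems(2,3) by simp
  qed
  then have "R = 0" using eq T0 by simp
  then have R0: "T ^ k * P + (\<Sum>i<k. T ^ i * c (Suc i)) = 0" unfolding R_def .
  have bd: "\<And>i. i < k \<Longrightarrow> \<bar>c (Suc i)\<bar> \<le> B" using Suc.prems(1) by simp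
  have IH: "P = 0 \<and> (\<forall>i<k. c (Suc i) = 0)"
    by (rule Suc.IH[of "\<lambda>i. c (Suc i)", OF bd Suc.prems(2) Suc.prems(3) R0])
  show ?case
  proof (intro conjI allI impI)
    show "P = 0" using IH by simp
    fix i assume "i < Suc k"
    then show "c i = 0" using IH c0 by (cases i) auto
  qed
qed

definition hChk :: "gram \<Rightarrow> int list \<Rightarrow> int list \<Rightarrow> int list \<Rightarrow> int list list \<Rightarrow> int \<Rightarrow> int \<Rightarrow> int \<Rightarrow> bool" where
  "hChk m h p e bs a b T = (h = map (\<lambda>j. a * T ^ length bs * ventry p j
      + sum_list (map (\<lambda>i. a * T ^ i * ventry (bs ! i) j) [0..<length bs]) + b * ventry e j) [0..<rk m])"

definition kChkA :: "gram \<Rightarrow> int list list \<Rightarrow> int list list \<Rightarrow> int list list \<Rightarrow> int list list \<Rightarrow> int \<Rightarrow> bool" where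
  "kChkA m GV Kvs LamK Y dK = (dK \<noteq> 0 \<and> length LamK = length Kvs \<and> length Y = rk m \<and>
     list_all (\<lambda>j. list_all (\<lambda>l. dK * (if j = l then 1 else 0) =
        dK * sum_list (map (\<lambda>a. ventry (Kvs ! a) j * ventry (LamK ! a) l) [0..<length Kvs])
        + sum_list (map (\<lambda>c. ventry (Y ! j) c * ventry (GV ! c) l) [0..<length GV])) [0..<rk m]) [0..<rk m])"

definition kChk :: "gram \<Rightarrow> int list list \<Rightarrow> int list list \<Rightarrow> int list list \<Rightarrow> int list list \<Rightarrow> int \<Rightarrow> bool" where
  "kChk m V Kvs LamK Y dK = kChkA m (map (Gv m) V) Kvs LamK Y dK"

definition uChk :: "gram \<Rightarrow> int list list \<Rightarrow> int list list \<Rightarrow> bool" where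
  "uChk m Kvs U = list_all (\<lambda>a. list_all (\<lambda>b. bilI m (Kvs ! a) (Kvs ! b) = 2 * (ventry (U ! a) b + ventry (U ! b) a))
      [0..<length Kvs]) [0..<length Kvs]"

lemma ivec_zero: "length v = rk m \<Longrightarrow> \<not> j < rk m \<Longrightarrow> ivec v j = 0"
  by (simp add: ivec_def ventry_def)

lemma ivec_vspace: "length v = rk m \<Longrightarrow> ivec v \<in> vspace m"
  by (simp add: vspace_def ivec_zero)

lemma ivec_h:
  assumes "hChk m h p e bs a b T" "length p = rk m" "length e = rk m" "list_all (\<lambda>v. length v = rk m) bs"
  shows "ivec h = (\<lambda>j. real_of_int (a * T ^ length bs) * ivec p j
      + (\<Sum>i<length bs. real_of_int (a * T ^ i) * ivec (bs ! i) j) + real_of_int b * ivec e j)"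
proof
  fix j
  show "ivec h j = real_of_int (a * T ^ length bs) * ivec p j
      + (\<Sum>i<length bs. real_of_int (a * T ^ i) * ivec (bs ! i) j) + real_of_int b * ivec e j"
  proof (cases "j < rk m")
    case True
    then show ?thesis using assms(1) by (simp add: hChk_def ivec_def ventry_def[of "map _ _"] sumL)
  next
    case False
    have "ivec (bs ! i) j = 0" if "i < length bs" for i
      using assms(4) that False by (simp add: list_all_iff ivec_zero)
    moreover have "length h = rk m" using assms(1) by (simp add: hChk_def)
    ultimately show ?thesis using False assms by (simp add: ivec_zero)
  qed
qed

lemma bil_vec_h:
  assumes "hChk m h p e bs a b T" "length p = rk m" "length e = rk m" "list_all (\<lambda>v. length v = rk m) bs"
  shows "bil m x (ivec h) = real_of_int (a * T ^ length bs) * bil m x (ivec p)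
      + (\<Sum>i<length bs. real_of_int (a * T ^ i) * bil m x (ivec (bs ! i))) + real_of_int b * bil m x (ivec e)"
  unfolding ivec_h[OF assms] bil_addR bil_smulR bil_sumR ..

lemma K_decomp:
  assumes kc: "kChk m V Kvs LamK Y dK" and kl: "list_all (\<lambda>v. length v = rk m) Kvs"
    and xv: "x \<in> vspace m" and perp: "\<And>c. c < length V \<Longrightarrow> bil m x (ivec (V ! c)) = 0"
  shows "x = (\<lambda>j. \<Sum>a<length Kvs. lf (rk m) (LamK ! a) x * ivec (Kvs ! a) j)"
proof
  fix j
  let ?n = "rk m"
  let ?k = "length Kvs"
  show "x j = (\<Sum>a<?k. lf ?n (LamK ! a) x * ivec (Kvs ! a) j)"
  proof (cases "j < ?n")
    case True
    have d0: "dK \<noteq> 0" using kc by (simp add: kChk_def kChkA_def)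
    have chk: "\<And>l. l < ?n \<Longrightarrow> dK * (if j = l then 1 else 0) =
        dK * (\<Sum>a<?k. ventry (Kvs ! a) j * ventry (LamK ! a) l)
        + (\<Sum>c<length V. ventry (Y ! j) c * ventry (Gv m (V ! c)) l)"
      using kc True unfolding kChk_def kChkA_def list_all_iff by (auto simp: sumL)
    have e1: "(\<Sum>l<?n. real_of_int (dK * (if j = l then 1 else 0)) * x l) = (\<Sum>l<?n. if j = l then real_of_int dK * x l else 0)"
      by (intro sum.cong refl) simp
    have "real_of_int dK * x j = (\<Sum>l<?n. real_of_int (dK * (if j = l then 1 else 0)) * x l)"
      unfolding e1 using True by simp
    also have "\<dots> = (\<Sum>l<?n. real_of_int dK * (\<Sum>a<?k. real_of_int (ventry (Kvs ! a) j) * real_of_int (ventry (LamK ! a) l) * x l)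
        + (\<Sum>c<length V. real_of_int (ventry (Y ! j) c) * (real_of_int (ventry (Gv m (V ! c)) l) * x l)))"
      by (intro sum.cong refl, subst chk) (simp_all add: sum_distrib_right sum_distrib_left algebra_simps)
    also have "\<dots> = real_of_int dK * (\<Sum>a<?k. real_of_int (ventry (Kvs ! a) j) * lf ?n (LamK ! a) x)
        + (\<Sum>c<length V. real_of_int (ventry (Y ! j) c) * lf ?n (Gv m (V ! c)) x)"
      unfolding lf_def sum.distrib
      by (simp add: sum_distrib_left sum.swap[of _ "{..<?n}"] mult.assoc)
    also have "\<dots> = real_of_int dK * (\<Sum>a<?k. real_of_int (ventry (Kvs ! a) j) * lf ?n (LamK ! a) x)"
      using perp by (simp add: bil_as_lf[symmetric])
    finally have "x j = (\<Sum>a<?k. real_of_int (ventry (Kvs ! a) j) * lf ?n (LamK ! a) x)"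
      using d0 by simp
    then show ?thesis by (simp add: ivec_def mult.commute)
  next
    case False
    have "ivec (Kvs ! a) j = 0" if "a < ?k" for a using kl that False by (simp add: list_all_iff ivec_zero)
    then show ?thesis using xv False by (simp add: vspace_def)
  qed
qed

lemma K_norm:
  assumes uc: "uChk m Kvs U" and xe: "x = (\<lambda>j. \<Sum>a<length Kvs. w a * ivec (Kvs ! a) j)"
  shows "bil m x x = 4 * (\<Sum>a<length Kvs. \<Sum>b<length Kvs. real_of_int (ventry (U ! a) b) * w a * w b)"
proof -
  let ?k = "length Kvs"
  have chk: "\<And>a b. a < ?k \<Longrightarrow> b < ?k \<Longrightarrow> bil m (ivec (Kvs ! a)) (ivec (Kvs ! b)) = 2 * (real_of_int (ventry (U ! a) b) + real_of_int (ventry (U ! b) a))"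
    using uc unfolding uChk_def list_all_iff by (auto simp: bil_vec_vec)
  have "bil m x x = (\<Sum>a<?k. w a * (\<Sum>b<?k. w b * bil m (ivec (Kvs ! a)) (ivec (Kvs ! b))))"
    unfolding xe bil_sumL bil_sumR ..
  also have "\<dots> = (\<Sum>a<?k. \<Sum>b<?k. 2 * (real_of_int (ventry (U ! a) b) * w a * w b) + 2 * (real_of_int (ventry (U ! b) a) * w a * w b))"
    by (intro sum.cong refl) (simp add: chk sum_distrib_left algebra_simps)
  also have "\<dots> = 2 * (\<Sum>a<?k. \<Sum>b<?k. real_of_int (ventry (U ! a) b) * w a * w b) + 2 * (\<Sum>a<?k. \<Sum>b<?k. real_of_int (ventry (U ! b) a) * w a * w b)"
    by (simp add: sum.distrib sum_distrib_left)
  also have "(\<Sum>a<?k. \<Sum>b<?k. real_of_int (ventry (U ! b) a) * w a * w b) = (\<Sum>a<?k. \<Sum>b<?k. real_of_int (ventry (U ! a) b) * w a * w b)"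
    by (subst sum.swap) (simp add: mult.commute mult.left_commute)
  finally show ?thesis by simp
qed

lemma Ints_floor_eq: "x \<in> \<int> \<Longrightarrow> real_of_int \<lfloor>x\<rfloor> = x"
  by (metis Ints_cases floor_of_int)

lemma rootless_mirrors:
  assumes sym: "symG m"
    and le: "length e = rk m" and lp: "length p = rk m" and lh: "length h = rk m"
    and lbs: "list_all (\<lambda>v. length v = rk m) bs" and lK: "list_all (\<lambda>v. length v = rk m) Kvs"
    and psd: "psdChk m e ell d2 den wcs"
    and hC: "hChk m h p e bs a b T"
    and hh: "bilI m h h < 0" and he: "6 * (bilI m h e)^2 < - bilI m h h"
    and bsC: "list_all (\<lambda>v. bilI m v e = 0 \<and> 6 * bilI m v v < (B+1)^2) bs"
    and TB: "0 \<le> B" "2 * B < T" "a \<noteq> 0"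
    and kC: "kChk m (e # p # bs) Kvs LamK Y dK"
    and uC: "uChk m Kvs U"
  shows "ivec h \<notin> mirrors m"
proof
  let ?n = "rk m"
  assume "ivec h \<in> mirrors m"
  then obtain r where rt: "root2 m r \<or> root6 m r" and rh0: "bil m (ivec h) r = 0"
    unfolding mirrors_def by auto
  have rl: "r \<in> latt m" and rr: "bil m r r = 2 \<or> bil m r r = 6"
    using rt by (auto simp: root2_def root6_def)
  have rh: "bil m r (ivec h) = 0" using rh0 bil_sym[OF sym] by simp
  define z where "z i = \<lfloor>r i\<rfloor>" for i
  have rz: "r = (\<lambda>i. real_of_int (z i))"
    using rl by (auto simp: latt_def z_def fun_eq_iff Ints_floor_eq)
  have rv: "r \<in> vspace m" using rl by (rule latt_vspace)
  define cI where "cI v = (\<Sum>i<?n. z i * ventry (Gv m v) i)" for v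
  have bI: "bil m r (ivec v) = real_of_int (cI v)" for v
    unfolding cI_def rz by (rule bil_int_vec)
  have rr6: "bil m r r \<le> 6" using rr by auto
  define he' where "he' = real_of_int (bilI m h e)"
  define hh' where "hh' = real_of_int (bilI m h h)"
  have hev: "bil m (ivec h) (ivec e) = he'" unfolding he'_def by (rule bil_vec_vec)
  have hhv: "bil m (ivec h) (ivec h) = hh'" unfolding hh'_def by (rule bil_vec_vec)
  have hhn: "hh' < 0" using hh unfolding hh'_def by simp
  have "real_of_int (6 * (bilI m h e)^2) < real_of_int (- bilI m h h)" using he by (simp only: of_int_less_iff)
  then have hen: "6 * he'^2 < - hh'" unfolding he'_def hh'_def by simp
  define re where "re = bil m r (ivec e)"
  define x where "x = (\<lambda>i. he' * r i - re * ivec h i)"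
  have xe: "bil m x (ivec e) = 0"
    unfolding x_def bil_diffL bil_smulL re_def hev by simp
  have x0: "0 \<le> bil m x x" by (rule psd_perp[OF psd xe])
  have hr: "bil m (ivec h) r = 0" using rh0 .
  have "bil m x x = he'^2 * bil m r r - 2 * he' * re * bil m r (ivec h) + re^2 * hh'"
    unfolding x_def bil_diffL bil_diffR bil_smulL bil_smulR hhv
    using hr rh by (simp add: power2_eq_square algebra_simps)
  then have "re^2 * (- hh') \<le> he'^2 * bil m r r" using x0 rh by simp
  also have "\<dots> \<le> he'^2 * 6" using rr6 by (intro mult_left_mono) auto
  also have "\<dots> < - hh'" using hen by simp
  finally have "re^2 * (- hh') < 1 * (- hh')" by simp
  then have "re^2 < 1" using hhn by (subst (asm) mult_less_cancel_right) auto
  then have "real_of_int ((cI e)^2) < real_of_int 1" unfolding re_def bI by simp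
  then have "(cI e)^2 < 1" by (simp only: of_int_less_iff)
  then have "\<bar>cI e\<bar> < 1" by (simp only: abs_square_less_1)
  then have "cI e = 0" by simp
  then have re0: "re = 0" unfolding re_def bI by simp
  have bnd: "\<bar>cI (bs ! i)\<bar> \<le> B" if "i < length bs" for i
  proof -
    let ?v = "bs ! i"
    have c: "bilI m ?v e = 0" "6 * bilI m ?v ?v < (B+1)^2"
      using bsC that by (auto simp: list_all_iff)
    have ve: "bil m (ivec ?v) (ivec e) = 0" using c bil_vec_vec by simp
    have re': "bil m r (ivec e) = 0" using re0 re_def by simp
    have cs: "(bil m r (ivec ?v))^2 \<le> bil m r r * bil m (ivec ?v) (ivec ?v)"
      by (rule cs_perp[OF sym psd re' ve])
    have vv: "0 \<le> bil m (ivec ?v) (ivec ?v)" by (rule psd_perp[OF psd ve])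
    have "bil m r r * bil m (ivec ?v) (ivec ?v) \<le> 6 * bil m (ivec ?v) (ivec ?v)"
      using rr6 vv by (intro mult_right_mono) auto
    also have "\<dots> = real_of_int (6 * bilI m ?v ?v)" by (simp add: bil_vec_vec)
    also have "\<dots> < real_of_int ((B+1)^2)" using c(2) by (simp only: of_int_less_iff)
    finally have "real_of_int ((cI ?v)^2) < real_of_int ((B+1)^2)" using cs bI by simp
    then have "(cI ?v)^2 < (B+1)^2" by (simp only: of_int_less_iff)
    then have "\<bar>cI ?v\<bar>^2 < (B+1)^2" by simp
    then have "\<bar>cI ?v\<bar> < B+1" by (rule power2_less_imp_less) (use TB(1) in simp)
    then show ?thesis by simp
  qed
  have s3: "bil m r (ivec h) = real_of_int (a * T ^ length bs) * bil m r (ivec p)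
      + (\<Sum>i<length bs. real_of_int (a * T ^ i) * bil m r (ivec (bs ! i))) + real_of_int b * bil m r (ivec e)"
    by (rule bil_vec_h[OF hC lp le lbs])
  have s4: "real_of_int (a * T ^ length bs) * bil m r (ivec p)
      + (\<Sum>i<length bs. real_of_int (a * T ^ i) * bil m r (ivec (bs ! i))) + real_of_int b * bil m r (ivec e)
      = real_of_int (a * (T ^ length bs * cI p + (\<Sum>i<length bs. T ^ i * cI (bs ! i))))"
  proof -
    have "bil m r (ivec e) = 0" using re0 re_def by simp
    moreover have "(\<Sum>i<length bs. real_of_int (a * T ^ i) * bil m r (ivec (bs ! i))) = real_of_int (a * (\<Sum>i<length bs. T ^ i * cI (bs ! i)))"
      unfolding bI by (simp add: sum_distrib_left mult.assoc)
    moreover have "real_of_int (a * T ^ length bs) * bil m r (ivec p) = real_of_int (a * (T ^ length bs * cI p))"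
      unfolding bI by (simp add: mult.assoc)
    ultimately show ?thesis by (simp add: distrib_left)
  qed
  have "real_of_int (a * (T ^ length bs * cI p + (\<Sum>i<length bs. T ^ i * cI (bs ! i)))) = 0"
    using rh s3 s4 by simp
  then have "a * (T ^ length bs * cI p + (\<Sum>i<length bs. T ^ i * cI (bs ! i))) = 0"
    by (simp only: of_int_eq_0_iff)
  then have sup0: "T ^ length bs * cI p + (\<Sum>i<length bs. T ^ i * cI (bs ! i)) = 0" using TB(3) by simp
  have "cI p = 0 \<and> (\<forall>i<length bs. cI (bs ! i) = 0)"
    by (rule superinc[of "length bs" "\<lambda>i. cI (bs ! i)" B T "cI p", OF bnd TB(2) TB(1) sup0])
  then have p0: "cI p = 0" and b0: "\<And>i. i < length bs \<Longrightarrow> cI (bs ! i) = 0" by auto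
  have perp: "bil m r (ivec ((e # p # bs) ! c)) = 0" if "c < length (e # p # bs)" for c
  proof (cases c)
    case 0
    then show ?thesis using re0 re_def by simp
  next
    case (Suc c')
    then show ?thesis
    proof (cases c')
      case 0
      then show ?thesis using Suc p0 bI by simp
    next
      case (Suc c'')
      then have "c'' < length bs" using \<open>c = Suc c'\<close> that by simp
      then show ?thesis using Suc \<open>c = Suc c'\<close> b0 bI by simp
    qed
  qed
  have rK: "r = (\<lambda>j. \<Sum>a<length Kvs. lf ?n (LamK ! a) r * ivec (Kvs ! a) j)"
    by (rule K_decomp[OF kC lK rv perp])
  define w where "w a = (\<Sum>l<?n. ventry (LamK ! a) l * z l)" for a
  have wI: "lf ?n (LamK ! a) r = real_of_int (w a)" for a
    unfolding lf_def w_def rz by simp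
  have "bil m r r = 4 * (\<Sum>a<length Kvs. \<Sum>b<length Kvs. real_of_int (ventry (U ! a) b) * lf ?n (LamK ! a) r * lf ?n (LamK ! b) r)"
    by (rule K_norm[OF uC rK])
  also have "\<dots> = real_of_int (4 * (\<Sum>a<length Kvs. \<Sum>b<length Kvs. ventry (U ! a) b * w a * w b))"
    by (simp add: wI)
  finally have "bil m r r = real_of_int (4 * (\<Sum>a<length Kvs. \<Sum>b<length Kvs. ventry (U ! a) b * w a * w b))" .
  then obtain N :: int where N: "bil m r r = real_of_int (4 * N)" by blast
  have "real_of_int (4 * N) = real_of_int 2 \<or> real_of_int (4 * N) = real_of_int 6" using rr N by simp
  then have "4 * N = 2 \<or> 4 * N = 6" by (simp only: of_int_eq_iff)
  then show False by presburger
qed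

definition allChk :: "gram \<Rightarrow> int list list \<Rightarrow> int list list \<Rightarrow> int list list \<Rightarrow> int list list \<Rightarrow> int list \<Rightarrow> int list \<Rightarrow> int list
   \<Rightarrow> int list list \<Rightarrow> int list \<Rightarrow> int \<Rightarrow> int \<Rightarrow> (int \<times> int list) list \<Rightarrow> int \<Rightarrow> int \<Rightarrow> int \<Rightarrow> int
   \<Rightarrow> int list list \<Rightarrow> int list list \<Rightarrow> int list list \<Rightarrow> int \<Rightarrow> int list list \<Rightarrow> bool" where
  "allChk m Ml A6 P Q h e p bs ell d2 den wcs a b T B Kvs LamK Y dK U \<longleftrightarrow>
     symG m \<and> isoChk m Ml \<and> invChk (rk m) Ml \<and> a6Chk m A6 \<and> pqChk m Ml P Q \<and> fixChk m Ml h \<and>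
     length e = rk m \<and> length p = rk m \<and> length h = rk m \<and>
     list_all (\<lambda>v. length v = rk m) bs \<and> list_all (\<lambda>v. length v = rk m) Kvs \<and>
     psdChk m e ell d2 den wcs \<and> hChk m h p e bs a b T \<and>
     bilI m h h < 0 \<and> 6 * (bilI m h e)^2 < - bilI m h h \<and>
     list_all (\<lambda>v. bilI m v e = 0 \<and> 6 * bilI m v v < (B+1)^2) bs \<and>
     0 \<le> B \<and> 2 * B < T \<and> a \<noteq> 0 \<and>
     kChk m (e # p # bs) Kvs LamK Y dK \<and> uChk m Kvs U"

lemma achiral_cert:
  assumes "allChk m Ml A6 P Q h e p bs ell d2 den wcs a b T B Kvs LamK Y dK U"
  shows "achiral m"
proof -
  have c: "symG m" "isoChk m Ml" "invChk (rk m) Ml" "a6Chk m A6" "pqChk m Ml P Q" "fixChk m Ml h"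
    "length e = rk m" "length p = rk m" "length h = rk m"
    "list_all (\<lambda>v. length v = rk m) bs" "list_all (\<lambda>v. length v = rk m) Kvs"
    "psdChk m e ell d2 den wcs" "hChk m h p e bs a b T"
    "bilI m h h < 0" "6 * (bilI m h e)^2 < - bilI m h h"
    "list_all (\<lambda>v. bilI m v e = 0 \<and> 6 * bilI m v v < (B+1)^2) bs"
    "0 \<le> B" "2 * B < T" "a \<noteq> 0"
    "kChk m (e # p # bs) Kvs LamK Y dK" "uChk m Kvs U"
    using assms unfolding allChk_def by auto
  show ?thesis
  proof (rule achiral_from[where M = "gentry Ml" and h = "ivec h"])
    show "\<And>x y. bil m (mapp m (gentry Ml) x) (mapp m (gentry Ml) y) = bil m x y"
      by (rule bil_mapp_iso[OF c(2)])
    show "\<And>x. x \<in> vspace m \<Longrightarrow> mapp m (gentry Ml) (mapp m (gentry Ml) x) = x"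
      by (rule mapp_invol[OF c(3)])
    show "z3_reversing m (gentry Ml)" by (rule z3_from[OF c(1) c(4) c(5)])
    show "ivec h \<in> vspace m" by (rule ivec_vspace[OF c(9)])
    show "bil m (ivec h) (ivec h) < 0" using c(14) by (simp add: bil_vec_vec)
    show "ivec h \<notin> mirrors m"
      by (rule rootless_mirrors[OF c(1) c(7) c(8) c(9) c(10) c(11) c(12) c(13) c(14) c(15) c(16) c(17) c(18) c(19) c(20) c(21)])
    show "mapp m (gentry Ml) (ivec h) = ivec h" by (rule mapp_fix[OF c(6)])
  qed
qed

definition cLDD_M :: "int list list" where
  "cLDD_M = [[3, -4, 3, -3, 2, -3, 2, 2, 0, 0, 0, 0], [-4, 3, -3, 3, -2, 3, -2, -2, 0, 0, 0, 0], [-2, 2, -2, 2, -1, 1, -1, -1, 0, 0, 0, 0], [2, -2, 2, -2, 1, -2, 1, 1, 0, 0, 0, 0], [-2, 2, -2, 1, -2, 2, -1, -1, 0, 0, 0, 0], [0, 0, -1, -1, 0, 0, 0, 0, 0, 0, 0, 0], [-2, 2, -2, 1, -1, 2, -2, -1, 0, 0, 0, 0], [-2, 2, -2, 1, -1, 2, -1, -2, 0, 0, 0, 0], [0, 0, 0, 0, 0, 0, 0, 0, 1, 0, 0, 0], [0, 0, 0, 0, 0, 0, 0, 0, 0, 1, 0, 0], [0, 0, 0, 0, 0, 0, 0, 0, 0, 0, 1, 0], [0, 0, 0, 0, 0, 0, 0, 0, 0, 0, 0, 1]]"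

definition cLDD_A6 :: "int list list" where
  "cLDD_A6 = [[0, 3, 0, 0, 0, 0, 0, 0, 0, 0, 0, 0], [3, 0, 0, 0, 0, 0, 0, 0, 0, 0, 0, 0], [0, 0, 4, 2, 0, 0, 0, 0, 0, 0, 0, 0], [0, 0, 2, 4, 0, 0, 0, 0, 0, 0, 0, 0], [0, 0, 0, 0, 6, 6, 3, 3, 0, 0, 0, 0], [0, 0, 0, 0, 6, 12, 6, 6, 0, 0, 0, 0], [0, 0, 0, 0, 3, 6, 6, 3, 0, 0, 0, 0], [0, 0, 0, 0, 3, 6, 3, 6, 0, 0, 0, 0], [0, 0, 0, 0, 0, 0, 0, 0, 6, 6, 3, 3], [0, 0, 0, 0, 0, 0, 0, 0, 6, 12, 6, 6], [0, 0, 0, 0, 0, 0, 0, 0, 3, 6, 6, 3], [0, 0, 0, 0, 0, 0, 0, 0, 3, 6, 3, 6]]"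

definition cLDD_P :: "int list list" where
  "cLDD_P = [[1, 2, 0, 0, 1, 0, 1, 1, 0, 0, 0, 0], [2, 1, 0, 0, 2, 0, 2, 2, 0, 0, 0, 0], [1, 2, 1, 0, 2, 2, 2, 2, 0, 0, 0, 0], [2, 1, 1, 0, 0, 2, 0, 0, 0, 0, 0, 0], [1, 2, 2, 0, 0, 1, 0, 0, 0, 0, 0, 0], [0, 0, 1, 0, 1, 2, 1, 1, 0, 0, 0, 0], [1, 2, 2, 0, 0, 1, 0, 0, 0, 0, 0, 0], [1, 2, 2, 0, 0, 1, 0, 0, 0, 0, 0, 0], [0, 0, 0, 0, 0, 0, 0, 0, 2, 2, 1, 1], [0, 0, 0, 0, 0, 0, 0, 0, 2, 1, 2, 2], [0, 0, 0, 0, 0, 0, 0, 0, 1, 2, 2, 1], [0, 0, 0, 0, 0, 0, 0, 0, 1, 2, 1, 2]]"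

definition cLDD_Q :: "int list list" where
  "cLDD_Q = [[0, -2, 1, -1, 0, 0, 0, 0, 0, 0, 0, 0], [-2, 0, -1, 1, -2, 3, -2, -2, 0, 0, 0, 0], [-2, 0, -1, 1, -1, 1, -1, -1, 0, 0, 0, 0], [0, -2, 0, 0, 1, -2, 1, 1, 0, 0, 0, 0], [-2, 0, -2, 1, 0, 0, 0, 0, 0, 0, 0, 0], [0, 0, -1, 0, 0, 0, 0, 0, 0, 0, 0, 0], [-2, 0, -2, 1, 0, 0, 0, 0, 0, 0, 0, 0], [-2, 0, -2, 1, 0, 0, 0, 0, 0, 0, 0, 0], [0, 0, 0, 0, 0, 0, 0, 0, 0, 0, 0, 0], [0, 0, 0, 0, 0, 0, 0, 0, -1, 2, -1, -1], [0, 0, 0, 0, 0, 0, 0, 0, 0, 0, 0, 0], [0, 0, 0, 0, 0, 0, 0, 0, 0, 0, 0, 0]]"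

definition cLDD_h :: "int list" where
  "cLDD_h = [-16833, 16833, 14432, -2401, 2401, -12031, 2401, 2401, 1, 399, 49, 343]"

definition cLDD_e :: "int list" where
  "cLDD_e = [1, -1, -1, 0, 0, 1, 0, 0, 0, 0, 0, 0]"

definition cLDD_p :: "int list" where
  "cLDD_p = [-2, 2, 1, -1, 1, 0, 1, 1, 0, 0, 0, 0]"

definition cLDD_bs :: "int list list" where
  "cLDD_bs = [[0, 0, 0, 0, 0, 0, 0, 0, 1, 0, 0, 0], [0, 0, 0, 0, 0, 0, 0, 0, 0, 1, 0, 0], [0, 0, 0, 0, 0, 0, 0, 0, 0, 1, 1, 0], [0, 0, 0, 0, 0, 0, 0, 0, 0, 1, 0, 1]]"

definition cLDD_ell :: "int list" where
  "cLDD_ell = [-6, 6, -4, -1, -3, 6, -3, -3, 0, 0, 0, 0]"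

definition cLDD_wcs :: "(int \<times> int list) list" where
  "cLDD_wcs = [(110, [6, -5, 5, -1, 3, -6, 3, 3, 0, 0, 0, 0]), (10, [0, 11, -5, 1, -3, 6, -3, -3, 0, 0, 0, 0]), (3, [0, 0, 10, -2, -5, 10, -5, -5, 0, 0, 0, 0]), (198, [0, 0, 0, 1, 0, 0, 0, 0, 0, 0, 0, 0]), (55, [0, 0, 0, 0, 3, 0, -1, -1, 0, 0, 0, 0]), (110, [0, 0, 0, 0, 0, 0, 2, -1, 0, 0, 0, 0]), (330, [0, 0, 0, 0, 0, 0, 0, 1, 0, 0, 0, 0]), (165, [0, 0, 0, 0, 0, 0, 0, 0, 2, -1, 0, 0]), (55, [0, 0, 0, 0, 0, 0, 0, 0, 0, 3, -2, -2]), (110, [0, 0, 0, 0, 0, 0, 0, 0, 0, 0, 2, -1]), (330, [0, 0, 0, 0, 0, 0, 0, 0, 0, 0, 0, 1])]"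

definition cLDD_K :: "int list list" where
  "cLDD_K = [[0, 0, 0, 0, -1, 0, 1, 0, 0, 0, 0, 0], [0, 0, 0, 0, -1, 0, 0, 1, 0, 0, 0, 0], [1, 0, 0, 0, -1, 0, 0, -1, 0, 0, 0, 0], [0, 1, 0, 0, 1, 0, 0, 1, 0, 0, 0, 0], [0, 1, 1, 0, 1, 1, 0, 1, 0, 0, 0, 0], [1, -1, 0, 1, -1, 1, 0, 0, 0, 0, 0, 0]]"

definition cLDD_Lam :: "int list list" where
  "cLDD_Lam = [[0, 0, 0, 0, 0, 0, 1, 0, 0, 0, 0, 0], [-1, 1, -1, 0, -1, 1, -1, 0, 0, 0, 0, 0], [1, 0, 1, 0, 0, -1, 0, 0, 0, 0, 0, 0], [0, 1, -2, 0, 0, 1, 0, 0, 0, 0, 0, 0], [0, 0, 1, 0, 0, 0, 0, 0, 0, 0, 0, 0], [0, 0, -1, 0, 0, 1, 0, 0, 0, 0, 0, 0]]"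

definition cLDD_Y :: "int list list" where
  "cLDD_Y = [[0, 0, 0, 0, 0, 0], [0, 0, 0, 0, 0, 0], [0, 0, 0, 0, 0, 0], [-4, -2, 0, 0, 0, 0], [0, 0, 0, 0, 0, 0], [0, 0, 0, 0, 0, 0], [0, 0, 0, 0, 0, 0], [-6, -2, 0, 0, 0, 0], [0, 0, 2, 0, 1, 1], [0, 0, 2, 0, 2, 2], [0, 0, 1, -1, 2, 1], [0, 0, 1, -1, 1, 2]]"

definition cLDD_U :: "int list list" where
  "cLDD_U = [[1, 1, 1, -1, -1, 1], [0, 1, 0, 0, 0, 1], [0, 0, 1, -1, 0, 1], [0, 0, 0, 1, 1, -1], [0, 0, 0, 0, 1, 0], [0, 0, 0, 0, 0, 1]]"

lemma cLDD_chk: "allChk (scale 2 U_lat \<oplus>\<^sub>L A2_lat \<oplus>\<^sub>L D4_lat \<oplus>\<^sub>L D4_lat) cLDD_M cLDD_A6 cLDD_P cLDD_Q cLDD_h cLDD_e cLDD_p cLDD_bs cLDD_ell 165 1 cLDD_wcs 1 (-12031) 7 3 cLDD_K cLDD_Lam cLDD_Y 2 cLDD_U"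
  by code_simp

lemma cLDD_achiral: "achiral (scale 2 U_lat \<oplus>\<^sub>L A2_lat \<oplus>\<^sub>L D4_lat \<oplus>\<^sub>L D4_lat)"
  by (rule achiral_cert[OF cLDD_chk])



definition cLDE_M :: "int list list" where
  "cLDE_M = [[3, -4, 3, -3, 2, -3, 2, 2, 0, 0, 0, 0, 0, 0, 0, 0], [-4, 3, -3, 3, -2, 3, -2, -2, 0, 0, 0, 0, 0, 0, 0, 0], [-2, 2, -2, 2, -1, 1, -1, -1, 0, 0, 0, 0, 0, 0, 0, 0], [2, -2, 2, -2, 1, -2, 1, 1, 0, 0, 0, 0, 0, 0, 0, 0], [-2, 2, -2, 1, -2, 2, -1, -1, 0, 0, 0, 0, 0, 0, 0, 0], [0, 0, -1, -1, 0, 0, 0, 0, 0, 0, 0, 0, 0, 0, 0, 0], [-2, 2, -2, 1, -1, 2, -2, -1, 0, 0, 0, 0, 0, 0, 0, 0], [-2, 2, -2, 1, -1, 2, -1, -2, 0, 0, 0, 0, 0, 0, 0, 0], [0, 0, 0, 0, 0, 0, 0, 0, 1, 0, 0, 0, 0, 0, 0, 0], [0, 0, 0, 0, 0, 0, 0, 0, 0, 1, 0, 0, 0, 0, 0, 0], [0, 0, 0, 0, 0, 0, 0, 0, 0, 0, 1, 0, 0, 0, 0, 0], [0, 0, 0, 0, 0, 0, 0, 0, 0, 0, 0, 1, 0, 0, 0, 0], [0, 0, 0, 0, 0, 0, 0, 0, 0, 0, 0, 0, 1, 0, 0, 0], [0, 0, 0, 0, 0, 0, 0, 0, 0, 0,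 0, 0, 0, 1, 0, 0], [0, 0, 0, 0, 0, 0, 0, 0, 0, 0, 0, 0, 0, 0, 1, 0], [0, 0, 0, 0, 0, 0, 0, 0, 0, 0, 0, 0, 0, 0, 0, 1]]"

definition cLDE_A6 :: "int list list" where
  "cLDE_A6 = [[0, 3, 0, 0, 0, 0, 0, 0, 0, 0, 0, 0, 0, 0, 0, 0], [3, 0, 0, 0, 0, 0, 0, 0, 0, 0, 0, 0, 0, 0, 0, 0], [0, 0, 4, 2, 0, 0, 0, 0, 0, 0, 0, 0, 0, 0, 0, 0], [0, 0, 2, 4, 0, 0, 0, 0, 0, 0, 0, 0, 0, 0, 0, 0], [0, 0, 0, 0, 6, 6, 3, 3, 0, 0, 0, 0, 0, 0, 0, 0], [0, 0, 0, 0, 6, 12, 6, 6, 0, 0, 0, 0, 0, 0, 0, 0], [0, 0, 0, 0, 3, 6, 6, 3, 0, 0, 0, 0, 0, 0, 0, 0], [0, 0, 0, 0, 3, 6, 3, 6, 0, 0, 0, 0, 0, 0, 0, 0], [0, 0, 0, 0, 0, 0, 0, 0, 24, 30, 42, 60, 48, 36, 24, 12], [0, 0, 0, 0, 0, 0, 0, 0, 30, 48, 60, 90, 72, 54, 36, 18], [0, 0, 0, 0, 0, 0, 0, 0, 42, 60, 84, 120, 96, 72, 48, 24], [0, 0, 0, 0, 0, 0, 0, 0, 60, 90, 120, 180, 144, 108, 72, 36], [0, 0, 0, 0, 0, 0, 0, 0, 48, 72, 96, 144, 120, 90, 60, 30], [0, 0, 0, 0, 0, 0, 0, 0, 36, 54,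 72, 108, 90, 72, 48, 24], [0, 0, 0, 0, 0, 0, 0, 0, 24, 36, 48, 72, 60, 48, 36, 18], [0, 0, 0, 0, 0, 0, 0, 0, 12, 18, 24, 36, 30, 24, 18, 12]]"

definition cLDE_P :: "int list list" where
  "cLDE_P = [[1, 2, 0, 0, 1, 0, 1, 1, 0, 0, 0, 0, 0, 0, 0, 0], [2, 1, 0, 0, 2, 0, 2, 2, 0, 0, 0, 0, 0, 0, 0, 0], [1, 2, 1, 0, 2, 2, 2, 2, 0, 0, 0, 0, 0, 0, 0, 0], [2, 1, 1, 0, 0, 2, 0, 0, 0, 0, 0, 0, 0, 0, 0, 0], [1, 2, 2, 0, 0, 1, 0, 0, 0, 0, 0, 0, 0, 0, 0, 0], [0, 0, 1, 0, 1, 2, 1, 1, 0, 0, 0, 0, 0, 0, 0, 0], [1, 2, 2, 0, 0, 1, 0, 0, 0, 0, 0, 0, 0, 0, 0, 0], [1, 2, 2, 0, 0, 1, 0, 0, 0, 0, 0, 0, 0, 0, 0, 0], [0, 0, 0, 0, 0, 0, 0, 0, 2, 1, 2, 2, 1, 0, 2, 1], [0, 0, 0, 0, 0, 0, 0, 0, 1, 1, 2, 0, 0, 0, 0, 0], [0, 0, 0, 0, 0, 0, 0, 0, 2, 2, 1, 1, 2, 0, 1, 2], [0, 0, 0, 0, 0, 0, 0, 0, 2, 0, 1, 0, 0, 0, 0, 0], [0, 0, 0, 0, 0, 0, 0, 0, 1, 0, 2, 0, 1, 0, 2, 1], [0, 0, 0, 0, 0, 0, 0, 0, 0, 0, 0,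 0, 0, 0, 1, 2], [0, 0, 0, 0, 0, 0, 0, 0, 2, 0, 1, 0, 2, 1, 0, 0], [0, 0, 0, 0, 0, 0, 0, 0, 1, 0, 2, 0, 1, 2, 0, 1]]"

definition cLDE_Q :: "int list list" where
  "cLDE_Q = [[0, -2, 1, -1, 0, 0, 0, 0, 0, 0, 0, 0, 0, 0, 0, 0], [-2, 0, -1, 1, -2, 3, -2, -2, 0, 0, 0, 0, 0, 0, 0, 0], [-2, 0, -1, 1, -1, 1, -1, -1, 0, 0, 0, 0, 0, 0, 0, 0], [0, -2, 0, 0, 1, -2, 1, 1, 0, 0, 0, 0, 0, 0, 0, 0], [-2, 0, -2, 1, 0, 0, 0, 0, 0, 0, 0, 0, 0, 0, 0, 0], [0, 0, -1, 0, 0, 0, 0, 0, 0, 0, 0, 0, 0, 0, 0, 0], [-2, 0, -2, 1, 0, 0, 0, 0, 0, 0, 0, 0, 0, 0, 0, 0], [-2, 0, -2, 1, 0, 0, 0, 0, 0, 0, 0, 0, 0, 0, 0, 0], [0, 0, 0, 0, 0, 0, 0, 0, 0, 0, 0, 0, 0, 1, -1, 0], [0, 0, 0, 0, 0, 0, 0, 0, 0, 0, -1, 1, 0, 0, 0, 0], [0, 0, 0, 0, 0, 0, 0, 0, -1, -1, 1, 1, -1, 1, 0, -1], [0, 0, 0, 0, 0, 0, 0, 0, -1, 0, 0, 1, 0, 0, 0, 0], [0, 0, 0, 0, 0, 0, 0, 0, 0, 0, -1, 1, 0, 1, -1, 0], [0, 0, 0, 0, 0, 0, 0, 0, 0, 0,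 0, 0, 0, 1, 0, -1], [0, 0, 0, 0, 0, 0, 0, 0, -1, 0, 0, 1, -1, 0, 1, 0], [0, 0, 0, 0, 0, 0, 0, 0, 0, 0, -1, 1, 0, -1, 1, 0]]"

definition cLDE_h :: "int list" where
  "cLDE_h = [-40413837, 40413837, 34649036, -5764801, 5764801, -28884235, 5764801, 5764801, 1647087, 1647093, 2607878, 4254621, 3431029, 2605085, 1764735, 823543]"

definition cLDE_e :: "int list" where
  "cLDE_e = [1, -1, -1, 0, 0, 1, 0, 0, 0, 0, 0, 0, 0, 0, 0, 0]"

definition cLDE_p :: "int list" where
  "cLDE_p = [-2, 2, 1, -1, 1, 0, 1, 1, 0, 0, 0, 0, 0, 0, 0, 0]"

definition cLDE_bs :: "int list list" where
  "cLDE_bs = [[0, 0, 0, 0, 0, 0, 0, 0, 1, 0, 0, 0, 0, 0, 0, 0], [0, 0, 0, 0, 0, 0, 0, 0, 0, 1, 0, 0, 0, 0, 0, 0], [0, 0, 0, 0, 0, 0, 0, 0, 0, 0, 1, 1, 0, 0, 0, 0], [0, 0, 0, 0, 0, 0, 0, 0, 0, 0, 1, 0, 0, 0, 0, 0], [0, 0, 0, 0, 0, 0, 0, 0, 0, 0, 1, 1, 1, 0, 0, 0], [0, 0, 0, 0, 0, 0, 0, 0, 0, 0, 1, 1, 1, 1, 0, 0], [0, 0, 0, 0, 0, 0, 0, 0, 0, 0, 1, 1, 1, 1, 1, 0], [0, 0, 0, 0, 0, 0, 0, 0, 2, 2, 3, 5, 4, 3, 2, 1]]"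

definition cLDE_ell :: "int list" where
  "cLDE_ell = [-6, 6, -4, -1, -3, 6, -3, -3, 0, 0, 0, 0, 0, 0, 0, 0]"

definition cLDE_wcs :: "(int \<times> int list) list" where
  "cLDE_wcs = [(220, [6, -5, 5, -1, 3, -6, 3, 3, 0, 0, 0, 0, 0, 0, 0, 0]), (20, [0, 11, -5, 1, -3, 6, -3, -3, 0, 0, 0, 0, 0, 0, 0, 0]), (6, [0, 0, 10, -2, -5, 10, -5, -5, 0, 0, 0, 0, 0, 0, 0, 0]), (396, [0, 0, 0, 1, 0, 0, 0, 0, 0, 0, 0, 0, 0, 0, 0, 0]), (110, [0, 0, 0, 0, 3, 0, -1, -1, 0, 0, 0, 0, 0, 0, 0, 0]), (220, [0, 0, 0, 0, 0, 0, 2, -1, 0, 0, 0, 0, 0, 0, 0, 0]), (660, [0, 0, 0, 0, 0, 0, 0, 1, 0, 0, 0, 0, 0, 0, 0, 0]), (330, [0, 0, 0, 0, 0, 0, 0, 0, 2, 0, -1, 0, 0, 0, 0, 0]), (330, [0, 0, 0, 0, 0, 0, 0, 0, 0, 2, 0, -1, 0, 0, 0, 0]), (110, [0, 0, 0, 0, 0, 0, 0, 0, 0, 0, 3, -2, 0, 0, 0, 0]), (22, [0, 0, 0, 0, 0, 0, 0, 0, 0, 0, 0, 5, -6, 0, 0, 0]), (33, [0, 0, 0, 0, 0, 0, 0, 0, 0, 0, 0, 0, 4, -5, 0, 0]), (55, [0, 0, 0, 0, 0, 0, 0, 0, 0, 0, 0, 0, 0, 3, -4, 0]), (110, [0, 0,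 0, 0, 0, 0, 0, 0, 0, 0, 0, 0, 0, 0, 2, -3]), (330, [0, 0, 0, 0, 0, 0, 0, 0, 0, 0, 0, 0, 0, 0, 0, 1])]"

definition cLDE_K :: "int list list" where
  "cLDE_K = [[0, 0, 1, 0, 0, 1, 0, 0, 0, 0, 0, 0, 0, 0, 0, 0], [0, 1, 0, 0, 1, 0, 1, 0, 0, 0, 0, 0, 0, 0, 0, 0], [0, 1, 0, 0, 0, 0, 1, 1, 0, 0, 0, 0, 0, 0, 0, 0], [0, 1, 0, 0, 1, 0, 0, 1, 0, 0, 0, 0, 0, 0, 0, 0], [1, 0, 0, 0, 0, 0, -1, -1, 0, 0, 0, 0, 0, 0, 0, 0], [1, -1, -1, 1, 0, 0, 0, -1, 0, 0, 0, 0, 0, 0, 0, 0]]"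

definition cLDE_Lam :: "int list list" where
  "cLDE_Lam = [[0, 0, 0, 0, 0, 1, 0, 0, 0, 0, 0, 0, 0, 0, 0, 0], [1, -1, 2, 0, 1, -2, 1, 0, 0, 0, 0, 0, 0, 0, 0, 0], [0, 1, -1, 0, -1, 1, 0, 0, 0, 0, 0, 0, 0, 0, 0, 0], [-1, 1, -2, 0, 0, 2, -1, 0, 0, 0, 0, 0, 0, 0, 0, 0], [1, 0, 1, 0, 0, -1, 0, 0, 0, 0, 0, 0, 0, 0, 0, 0], [0, 0, -1, 0, 0, 1, 0, 0, 0, 0, 0, 0, 0, 0, 0, 0]]"

definition cLDE_Y :: "int list list" where
  "cLDE_Y = [[0, 0, 0, 0, 0, 0, 0, 0, 0, 0], [0, 0, 0, 0, 0, 0, 0, 0, 0, 0], [0, 0, 0, 0, 0, 0, 0, 0, 0, 0], [-2, -1, 0, 0, 0, 0, 0, 0, 0, 0], [0, 0, 0, 0, 0, 0, 0, 0, 0, 0], [0, 0, 0, 0, 0, 0, 0, 0, 0, 0], [0, 0, 0, 0, 0, 0, 0, 0, 0, 0], [-3, -1, 0, 0, 0, 0, 0, 0, 0, 0], [0, 0, 0, 1, 0, 1, 0, 0, 0, 2], [0, 0, -1, 2, 0, 1, 0, 0, 0, 3], [0, 0, -1, 2, 0, 2, 0, 0, 0, 4], [0, 0, -2, 3, 0, 2, 0, 0, 0, 6], [0, 0, -2, 2, -1, 2, 0, 0, 0, 5], [0, 0, -2, 1, -1, 2, -1, 0, 0, 4], [0, 0, -2, 0, -1, 2, -1, -1, 0,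 3], [0, 0, -2, -1, -1, 2, -1, -1, -1, 2]]"

definition cLDE_U :: "int list list" where
  "cLDE_U = [[1, -1, -1, -1, 1, -1], [0, 1, 1, 1, 0, 1], [0, 0, 1, 1, -1, 0], [0, 0, 0, 1, 0, 0], [0, 0, 0, 0, 1, 0], [0, 0, 0, 0, 0, 1]]"

lemma cLDE_chk: "allChk (scale 2 U_lat \<oplus>\<^sub>L A2_lat \<oplus>\<^sub>L D4_lat \<oplus>\<^sub>L E8_lat) cLDE_M cLDE_A6 cLDE_P cLDE_Q cLDE_h cLDE_e cLDE_p cLDE_bs cLDE_ell 330 1 cLDE_wcs 1 (-28884235) 7 3 cLDE_K cLDE_Lam cLDE_Y 1 cLDE_U"
  by code_simp

lemma cLDE_achiral: "achiral (scale 2 U_lat \<oplus>\<^sub>L A2_lat \<oplus>\<^sub>L D4_lat \<oplus>\<^sub>L E8_lat)"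
  by (rule achiral_cert[OF cLDE_chk])



definition cLE2_M :: "int list list" where
  "cLE2_M = [[313, -312, 312, -312, 78, -6, -192, 6, 210, 0, -222, 108], [-312, 313, -312, 312, -78, 6, 192, -6, -210, 0, 222, -108], [-208, 208, -207, 208, -52, 4, 128, -4, -140, 0, 148, -72], [208, -208, 208, -207, 52, -4, -128, 4, 140, 0, -148, 72], [-6, 6, -6, 6, -1, 0, 4, 0, -4, 0, 4, -4], [-24, 24, -24, 24, -6, -1, 16, 0, -16, 0, 16, -10], [66, -66, 66, -66, 16, -2, -39, 2, 44, 0, -48, 20], [-54, 54, -54, 54, -14, 0, 36, -1, -36, 0, 36, -22], [-144, 144, -144, 144, -36, 2, 90, -2, -97, 0, 100, -52], [-24, 24, -24, 24, -6, 0, 16, 0, -16, -1, 16, -10], [96, -96, 96, -96, 24, -2, -58, 2, 64, 0, -69, 32], [-6, 6, -6, 6, -2, 0, 4, 0, -4, 0, 4, -3]]"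

definition cLE2_A6 :: "int list list" where
  "cLE2_A6 = [[0, 3, 0, 0, 0, 0, 0, 0, 0, 0, 0, 0], [3, 0, 0, 0, 0, 0, 0, 0, 0, 0, 0, 0], [0, 0, 4, 2, 0, 0, 0, 0, 0, 0, 0, 0], [0, 0, 2, 4, 0, 0, 0, 0, 0, 0, 0, 0], [0, 0, 0, 0, 12, 15, 21, 30, 24, 18, 12, 6], [0, 0, 0, 0, 15, 24, 30, 45, 36, 27, 18, 9], [0, 0, 0, 0, 21, 30, 42, 60, 48, 36, 24, 12], [0, 0, 0, 0, 30, 45, 60, 90, 72, 54, 36, 18], [0, 0, 0, 0, 24, 36, 48, 72, 60, 45, 30, 15], [0, 0, 0, 0, 18, 27, 36, 54, 45, 36, 24, 12], [0, 0, 0, 0, 12, 18, 24, 36, 30, 24, 18, 9], [0, 0, 0, 0, 6, 9, 12, 18, 15, 12, 9, 6]]"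

definition cLE2_P :: "int list list" where
  "cLE2_P = [[0, 1, 0, 0, 0, 0, 0, 0, 0, 0, 0, 0], [1, 0, 0, 0, 0, 0, 0, 0, 0, 0, 0, 0], [2, 1, 2, 0, 1, 1, 1, 0, 0, 1, 2, 1], [1, 2, 2, 0, 2, 2, 2, 0, 0, 2, 1, 2], [0, 0, 0, 0, 2, 2, 1, 1, 2, 2, 2, 0], [0, 0, 0, 0, 2, 2, 1, 1, 2, 2, 2, 0], [0, 0, 0, 0, 1, 1, 0, 0, 1, 1, 1, 1], [0, 0, 0, 0, 1, 1, 0, 2, 0, 1, 2, 0], [0, 0, 0, 0, 2, 2, 1, 0, 1, 2, 0, 2], [0, 0, 0, 0, 2, 2, 1, 1, 2, 2, 2, 0], [0, 0, 0, 0, 2, 2, 1, 2, 0, 2, 1, 1], [0, 0, 0, 0, 0, 0, 1, 0, 2, 0, 1, 0]]"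

definition cLE2_Q :: "int list list" where
  "cLE2_Q = [[104, -104, 104, -104, 26, -2, -64, 2, 70, 0, -74, 36], [-104, 104, -104, 104, -26, 2, 64, -2, -70, 0, 74, -36], [-70, 68, -70, 70, -18, 0, 42, 0, -46, 0, 48, -24], [68, -70, 68, -68, 16, -4, -44, 4, 48, -2, -48, 22], [-2, 2, -2, 2, -2, -2, 2, 2, -2, 0, 0, 0], [-8, 8, -8, 8, -4, -2, 6, 2, -6, 0, 4, -2], [22, -22, 22, -22, 4, -2, -12, 2, 14, 0, -16, 6], [-18, 18, -18, 18, -6, 0, 14, -2, -10, 0, 10, -6], [-48, 48, -48, 48, -14, -2, 30, 2, -32, -2, 36, -20], [-8, 8, -8, 8, -4, -2, 6, 2, -6, 0, 4, -2], [32, -32, 32, -32, 6, -2, -18, 0, 24, -2, -22, 10], [-2, 2, -2, 2, 0, 0, 0, 2, -4, 2, 0, 0]]"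

definition cLE2_h :: "int list" where
  "cLE2_h = [-141195, 138837, 93935, -94221, -6860, 343, -44223, 3087, 47653, 343, -46967, 2401]"

definition cLE2_e :: "int list" where
  "cLE2_e = [3, -3, -2, 2, 0, 0, 1, 0, -1, 0, 1, 0]"

definition cLE2_p :: "int list" where
  "cLE2_p = [0, -1, 0, 0, -3, 0, 1, 1, 0, 0, 0, 1]"

definition cLE2_bs :: "int list list" where
  "cLE2_bs = [[0, 1, 1, 0, 0, 0, 0, 0, 0, 0, 0, 0], [0, -1, 0, 1, 0, 0, 0, 0, 0, 0, 0, 0], [1, 0, 0, 1, 0, 0, 0, 0, 0, 0, 0, 0], [2, -2, -2, 1, 1, 1, 2, 2, 1, 1, 1, 0]]"

definition cLE2_ell :: "int list" where
  "cLE2_ell = [-30, 30, -30, 30, 6, 0, 12, 0, -20, 0, 20, -10]"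

definition cLE2_wcs :: "(int \<times> int list) list" where
  "cLE2_wcs = [(26488, [45, -43, 45, -45, 3, 0, -24, 0, 30, 0, -30, 15]), (602, [0, 88, -45, 45, -3, 0, 24, 0, -30, 0, 30, -15]), (630, [0, 0, 43, 1, -3, 0, 24, 0, -30, 0, 30, -15]), (5940, [0, 0, 0, 14, 1, 0, -8, 0, 10, 0, -10, 5]), (7740, [0, 0, 0, 0, 11, 0, -4, 0, -2, 0, 2, -1]), (1191960, [0, 0, 0, 0, 0, 2, 0, -1, 0, 0, 0, 0]), (18060, [0, 0, 0, 0, 0, 0, 12, -11, 6, 0, -6, 3]), (28380, [0, 0, 0, 0, 0, 0, 0, 7, -6, 0, -6, 3]), (85140, [0, 0, 0, 0, 0, 0, 0, 0, 4, -7, 4, -2]), (595980, [0, 0, 0, 0, 0, 0, 0, 0, 0, 1, 0, -2]), (1191960, [0, 0, 0, 0, 0, 0, 0, 0, 0, 0, 0, 1])]"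

definition cLE2_K :: "int list list" where
  "cLE2_K = [[0, 0, 0, 0, 0, 1, 0, 1, 0, 0, 0, 0], [0, 0, 0, 0, 0, 0, 0, 0, 0, 1, 0, 0], [-12, 12, 8, -8, 0, 0, -3, 1, 5, 0, -4, 0], [6, -6, -4, 4, 0, -1, 1, -2, -4, -2, 1, 0], [0, 0, 0, 0, 1, 1, 2, 3, 3, 2, 2, 1], [3, -3, -2, 2, -1, -2, -1, -3, -3, -2, 0, -1]]"

definition cLE2_Lam :: "int list list" where
  "cLE2_Lam = [[-6, 0, 6, 0, -30, -6, 24, 7, -11, 0, 0, 0], [-10, 0, 10, 0, -48, -10, 40, 10, -18, 1, 0, 0], [-4, 0, 4, 0, -19, -4, 16, 4, -7, 0, 0, 0], [-5, 0, 5, 0, -23, -5, 20, 5, -9, 0, 0, 0], [-1, 0, 1, 0, -5, -2, 4, 2, -2, 0, 0, 0], [-1, 0, 1, 0, -6, -2, 4, 2, -2, 0, 0, 0]]"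

definition cLE2_Y :: "int list list" where
  "cLE2_Y = [[-12, 12, 68, 34, -36, 36], [12, -12, -68, -35, 37, -36], [8, -8, -44, -22, 24, -24], [-8, 8, 46, 24, -24, 24], [0, 0, 0, 0, 0, 0], [0, 0, 0, 0, 0, 0], [-5, 5, 28, 14, -15, 15], [0, 0, 0, 0, 0, 0], [0, 0, 0, 0, 0, 0], [0, 0, 0, 0, 0, 0], [-6, 7, 40, 20, -22, 20], [1, 0, -2, -1, 1, -2]]"

definition cLE2_U :: "int list list" where
  "cLE2_U = [[1, 0, -1, 0, -1, -1], [0, 1, -1, -1, -1, -1], [0, 0, 1, 0, 1, 1], [0, 0, 0, 1, 0, 0], [0, 0, 0, 0, 1, 1], [0, 0, 0, 0, 0, 1]]"

lemma cLE2_chk: "allChk (scale 2 U_lat \<oplus>\<^sub>L A2_lat \<oplus>\<^sub>L scale 2 E8_lat) cLE2_M cLE2_A6 cLE2_P cLE2_Q cLE2_h cLE2_e cLE2_p cLE2_bs cLE2_ell 148995 4 cLE2_wcs 1 (-47310) 7 3 cLE2_K cLE2_Lam cLE2_Y 2 cLE2_U"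
  by code_simp

lemma cLE2_achiral: "achiral (scale 2 U_lat \<oplus>\<^sub>L A2_lat \<oplus>\<^sub>L scale 2 E8_lat)"
  by (rule achiral_cert[OF cLE2_chk])



definition cLE_M :: "int list list" where
  "cLE_M = [[3, -4, 3, -3, 0, -2, 0, 2, -1, -1, 0, 2], [-4, 3, -3, 3, 0, 2, 0, -2, 1, 1, 0, -2], [-2, 2, -2, 2, 0, 1, 0, -1, 1, 0, 0, -1], [2, -2, 2, -2, 0, -1, 0, 1, 0, -1, 0, 1], [0, 0, 1, 1, 1, 0, 0, 0, 0, 0, -1, 0], [2, -2, 3, 0, 0, -1, 0, 2, -1, -1, -1, 1], [0, 0, 2, 2, 0, 0, 1, 0, 0, 0, -2, 0], [0, 0, 3, 3, 0, 0, 0, 1, 0, 0, -3, 0], [2, -2, 4, 1, 0, -2, 0, 2, 0, -1, -2, 1], [2, -2, 3, 0, 0, -2, 0, 2, 0, -1, -2, 1], [0, 0, 1, 1, 0, 0, 0, 0, 1, -1, -1, 0], [-2, 2, -1, 2, 0, 1, 0, -1, 1, 0, 0, -2]]"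

definition cLE_A6 :: "int list list" where
  "cLE_A6 = [[0, 3, 0, 0, 0, 0, 0, 0, 0, 0, 0, 0], [3, 0, 0, 0, 0, 0, 0, 0, 0, 0, 0, 0], [0, 0, 4, 2, 0, 0, 0, 0, 0, 0, 0, 0], [0, 0, 2, 4, 0, 0, 0, 0, 0, 0, 0, 0], [0, 0, 0, 0, 24, 30, 42, 60, 48, 36, 24, 12], [0, 0, 0, 0, 30, 48, 60, 90, 72, 54, 36, 18], [0, 0, 0, 0, 42, 60, 84, 120, 96, 72, 48, 24], [0, 0, 0, 0, 60, 90, 120, 180, 144, 108, 72, 36], [0, 0, 0, 0, 48, 72, 96, 144, 120, 90, 60, 30], [0, 0, 0, 0, 36, 54, 72, 108, 90, 72, 48, 24], [0, 0, 0, 0, 24, 36, 48, 72, 60, 48, 36, 18], [0, 0, 0, 0, 12, 18, 24, 36, 30, 24, 18, 12]]"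

definition cLE_P :: "int list list" where
  "cLE_P = [[1, 2, 0, 0, 0, 2, 0, 0, 2, 2, 0, 1], [2, 1, 0, 0, 0, 1, 0, 0, 1, 1, 0, 2], [1, 2, 1, 0, 1, 2, 2, 0, 0, 2, 1, 0], [2, 1, 1, 0, 1, 1, 2, 0, 2, 1, 1, 1], [0, 0, 2, 0, 1, 1, 0, 2, 0, 1, 2, 1], [2, 1, 0, 0, 1, 0, 2, 0, 2, 2, 0, 2], [0, 0, 1, 0, 0, 2, 0, 1, 0, 2, 1, 2], [0, 0, 0, 0, 2, 0, 1, 0, 0, 0, 0, 0], [2, 1, 2, 0, 0, 2, 0, 0, 2, 0, 2, 0], [2, 1, 0, 0, 1, 2, 2, 0, 0, 0, 0, 2], [0, 0, 2, 0, 2, 0, 1, 0, 2, 0, 2, 1], [1, 2, 1, 0, 1, 2, 2, 0, 0, 2, 1, 0]]"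

definition cLE_Q :: "int list list" where
  "cLE_Q = [[0, -2, 1, -1, 0, -2, 0, 2, -1, -1, 1, 0], [-2, 0, -1, 1, 0, 0, 0, 0, 0, 0, 1, -2], [-2, 0, -1, 1, 0, -1, -1, 1, 1, -1, 0, 0], [0, -2, 0, 0, 0, -1, -1, 2, -1, 0, 0, 0], [0, 0, -1, 1, 0, 0, 1, -1, 1, 0, -1, 0], [0, -2, 1, 0, 0, 0, -1, 2, -1, -1, 1, -1], [0, 0, 0, 1, 0, -1, 1, 0, 1, -1, 0, -1], [0, 0, 1, 1, -1, 0, 0, 1, 0, 0, -1, 0], [0, -2, 0, 1, 0, -2, 0, 2, -1, 1, -2, 1], [0, -2, 1, 0, 0, -2, -1, 2, 0, 0, 0, -1], [0, 0, -1, 1, -1, 0, 0, 1, -1, 1, -1, 0], [-2, 0, -1, 1, 0, -1, -1, 1, 1, -1, 0, 0]]"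

definition cLE_h :: "int list" where
  "cLE_h = [-31265, 31265, 15657, -15608, 399, 50, 2843, 31756, 490, 441, 49, 15657]"

definition cLE_e :: "int list" where
  "cLE_e = [2, -2, -1, 1, 0, 0, 0, -2, 0, 0, 0, -1]"

definition cLE_p :: "int list" where
  "cLE_p = [0, 0, 0, 0, 0, 0, 1, 0, 0, 0, 0, 0]"

definition cLE_bs :: "int list list" where
  "cLE_bs = [[0, 0, 0, 0, 0, 1, 1, 1, 0, 0, 0, 0], [0, 0, 0, 0, 1, 0, 0, 0, 0, 0, 0, 0], [1, -1, 0, 1, 1, 1, 2, 2, 3, 2, 1, 0], [2, -2, -1, 1, 1, 0, 1, -1, 1, 1, 0, -1]]"

definition cLE_ell :: "int list" where
  "cLE_ell = [-12, 12, -9, 9, 0, 6, 6, -12, 6, 2, -1, -4]"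

definition cLE_wcs :: "(int \<times> int list) list" where
  "cLE_wcs = [(220540215, [24, -23, 18, -18, 0, -12, -12, 24, -12, -2, -2, 10]), (4692345, [0, 47, -18, 18, 0, 12, 12, -24, 12, 2, 2, -10]), (840420, [0, 0, 67, -20, 0, 18, 18, -36, 18, 3, 3, -15]), (4086180, [0, 0, 0, 29, 0, -6, -6, 12, -6, -1, -1, 5]), (1323241290, [0, 0, 0, 0, 2, 0, -1, 0, 0, 0, 0, 0]), (1983870, [0, 0, 0, 0, 0, 46, -12, -5, -12, -2, -2, 10]), (1278494, [0, 0, 0, 0, 0, 0, 45, -10, -24, -4, -4, 20]), (29405362, [0, 0, 0, 0, 0, 0, 0, 5, -6, 2, 2, -10]), (132324129, [0, 0, 0, 0, 0, 0, 0, 0, 4, -5, 0, 0]), (18903447, [0, 0, 0, 0, 0, 0, 0, 0, 0, 7, -8, 0]), (378068940, [0, 0, 0, 0, 0, 0, 0, 0, 0, 0, 1, 0])]"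

definition cLE_K :: "int list list" where
  "cLE_K = [[1, 0, 0, 0, 0, 1, 0, 0, 1, 1, 0, 0], [1, 0, -1, 0, 1, 2, 2, 3, 3, 2, 1, 1], [0, 0, 0, 0, 1, 1, 2, 3, 2, 2, 2, 0], [1, 0, 0, 1, -1, -1, -2, -3, -2, -1, -1, 0], [-2, 1, 1, -1, 0, -1, 0, 0, -1, -1, 0, 1], [1, -1, -1, 0, 2, 4, 4, 6, 6, 5, 3, 1]]"

definition cLE_Lam :: "int list list" where
  "cLE_Lam = [[1, 0, 1, -1, 0, 0, 0, 0, 0, 0, 0, 0], [0, 1, -1, 0, 0, 0, 0, 0, 0, 0, 0, 0], [1, 0, 1, 0, 2, -1, 0, 0, 0, 0, 0, 0], [-1, 1, 0, 2, -1, 1, 0, 0, 0, 0, 0, 0], [-1, 1, 0, 1, -1, 1, 0, 0, 0, 0, 0, 0], [-1, 0, 0, 1, -1, 1, 0, 0, 0, 0, 0, 0]]"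

definition cLE_Y :: "int list list" where
  "cLE_Y = [[0, 0, 0, 0, 0, 0], [0, 0, 0, 0, 0, 0], [0, 0, 0, 0, 0, 0], [0, 0, 0, 0, 0, 0], [0, 0, 0, 0, 0, 0], [0, 0, 0, 0, 0, 0], [0, 0, 0, -1, 0, 0], [0, -1, 0, -2, 0, 0], [0, 0, -1, -1, 0, 0], [0, 0, -2, -2, -2, 1], [1, 0, -2, -2, -2, 0], [0, 2, -2, 1, -1, 0]]"

definition cLE_U :: "int list list" where
  "cLE_U = [[1, 1, -1, 1, -1, 1], [0, 1, -1, 1, -1, 1], [0, 0, 1, -1, 0, 0], [0, 0, 0, 1, -1, 0], [0, 0, 0, 0, 1, -1], [0, 0, 0, 0, 0, 1]]"

lemma cLE_chk: "allChk (scale 2 U_lat \<oplus>\<^sub>L A2_lat \<oplus>\<^sub>L E8_lat) cLE_M cLE_A6 cLE_P cLE_Q cLE_h cLE_e cLE_p cLE_bs cLE_ell 1323241290 1 cLE_wcs 1 (-16000) 7 3 cLE_K cLE_Lam cLE_Y 1 cLE_U"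
  by code_simp

lemma cLE_achiral: "achiral (scale 2 U_lat \<oplus>\<^sub>L A2_lat \<oplus>\<^sub>L E8_lat)"
  by (rule achiral_cert[OF cLE_chk])



theorem proposition3p5:
  shows "achiral (scale 2 U_lat \<oplus>\<^sub>L A2_lat \<oplus>\<^sub>L D4_lat \<oplus>\<^sub>L D4_lat) \<and>
         achiral (scale 2 U_lat \<oplus>\<^sub>L A2_lat \<oplus>\<^sub>L D4_lat \<oplus>\<^sub>L E8_lat) \<and>
         achiral (scale 2 U_lat \<oplus>\<^sub>L A2_lat \<oplus>\<^sub>L scale 2 E8_lat) \<and>
         achiral (scale 2 U_lat \<oplus>\<^sub>L A2_lat \<oplus>\<^sub>L E8_lat)"
  using cLDD_achiral cLDE_achiral cLE2_achiral cLE_achiral by blast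

end
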